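(* Let $\mathfrak{B}=\{\mathscr{M}^{KI},\mathscr{M}^{KK},\mathscr{A}^{KK},\mathscr{H}^{KK},\mathscr{S}\}$. Then the graph parameter $p_{\mathfrak{B}}$ is equivalent to each of $\widetilde{\Delta}$, $\mathsf{cdeg}$, $\max\{\mathsf{cideg},\widetilde{\omega}\}$, $\max\{\alpha^{\ast},\widetilde{\omega}\}$ and $\max\{\theta^{\ast},\widetilde{\omega}\}$; that is, for each such parameter $q$ there are functions $f,g\colon\mathbb{N}\to\mathbb{N}$ with $p_{\mathfrak{B}}(G)\le f(q(G))$ and $q(G)\le g(p_{\mathfrak{B}}(G))$ for every finite graph $G$.
   Context: Two vertices are equivalent if they lie in exactly the same maximal cliques. $\widetilde{G}$ is the clique-quotient graph (equivalence classes as vertices, adjacency inherited from representatives), $\widetilde{\Delta}(G)$ its maximum degree. $\widetilde{\omega}(G)$ is the maximum over maximal cliques $K$ of the number of equivalence classes meeting $K$; $\mathsf{cideg}(G)$ the maximum over vertices of the number of maximal cliques containing it; $\mathsf{cdeg}(G)$ the maximum over maximal cliques $K$ of the number of other maximal cliques intersecting $K$. $\alpha^{\ast}(G)=\max_v\alpha(G[N[v]])$, $\theta^{\ast}(G)=\max_v\theta(G[N[v]])$, $\theta$ the clique-cover number. For disjoint ordered sets $X=\{x_1,\dots,x_n\}$, $Y=\{y_1,\dots,y_n\}$ and a vertex $c$: $\mathscr{S}_n$ is the star with centre $c$ and $n$ leaves; $\mathscr{M}^{KI}_n$ has edges $x_iy_i$ and $X$ a clique, $Y$ independent; $\mathscr{M}^{KK}_n$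 has edges $x_iy_i$ and $X,Y$ cliques; $\mathscr{A}^{KK}_n$ has edges $x_iy_j$ ($i\ne j$) and $X,Y$ cliques; $\mathscr{H}^{KK}_n$ has edges $x_iy_j$ ($i\le j$) and $X,Y$ cliques. For a family $\mathfrak{F}$ of such sequences, $p_{\mathfrak{F}}(G)$ is the maximum $n$ such that some $\mathscr{X}\in\mathfrak{F}$ has $\mathscr{X}_n$ as an induced subgraph of $G$. *)

theory Defs
  imports Main
begin

type_synonym 'v graph = "'v set \<times> ('v \<Rightarrow> 'v \<Rightarrow> bool)"

definition verts :: "'v graph \<Rightarrow> 'v set" where "verts G = fst G"
definition adj :: "'v graph \<Rightarrow> 'v \<Rightarrow> 'v \<Rightarrow> bool" where "adj G = snd G"

definition fin_simple_graph :: "'v graph \<Rightarrow> bool" where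
  "fin_simple_graph G \<longleftrightarrow> finite (verts G) \<and>
     (\<forall>u v. adj G u v \<longrightarrow> u \<in> verts G \<and> v \<in> verts G \<and> u \<noteq> v \<and> adj G v u)"

definition maxn :: "nat set \<Rightarrow> nat" where
  "maxn S = (if S = {} then 0 else Max S)"

definition clique :: "'v graph \<Rightarrow> 'v set \<Rightarrow> bool" where
  "clique G K \<longleftrightarrow> K \<subseteq> verts G \<and> (\<forall>u\<in>K. \<forall>v\<in>K. u \<noteq> v \<longrightarrow> adj G u v)"

definition max_clique :: "'v graph \<Rightarrow> 'v set \<Rightarrow> bool" where
  "max_clique G K \<longleftrightarrow> clique G K \<and> (\<forall>K'. clique G K' \<and> K \<subseteq> K' \<longrightarrow> K' = K)"

definition max_cliques :: "'v graph \<Rightarrow> 'v set set" where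
  "max_cliques G = {K. max_clique G K}"

definition indep :: "'v graph \<Rightarrow> 'v set \<Rightarrow> bool" where
  "indep G S \<longleftrightarrow> S \<subseteq> verts G \<and> (\<forall>u\<in>S. \<forall>v\<in>S. \<not> adj G u v)"

definition closed_nbhd :: "'v graph \<Rightarrow> 'v \<Rightarrow> 'v set" where
  "closed_nbhd G v = insert v {u \<in> verts G. adj G v u}"

definition alpha_on :: "'v graph \<Rightarrow> 'v set \<Rightarrow> nat" where
  "alpha_on G S = maxn {card I | I. I \<subseteq> S \<and> indep G I}"

definition theta_on :: "'v graph \<Rightarrow> 'v set \<Rightarrow> nat" where
  "theta_on G S = (LEAST k. \<exists>F. finite F \<and> card F = k \<and> (\<forall>C\<in>F. clique G C) \<and> \<Union>F = S)"

definition cequiv :: "'v graph \<Rightarrow> 'v \<Rightarrow> 'v \<Rightarrow> bool" where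
  "cequiv G u v \<longleftrightarrow> {K \<in> max_cliques G. u \<in> K} = {K \<in> max_cliques G. v \<in> K}"

definition cclass :: "'v graph \<Rightarrow> 'v \<Rightarrow> 'v set" where
  "cclass G v = {u \<in> verts G. cequiv G u v}"

definition cclasses :: "'v graph \<Rightarrow> 'v set set" where
  "cclasses G = cclass G ` verts G"

definition quotient_graph :: "'v graph \<Rightarrow> 'v set graph" where
  "quotient_graph G = (cclasses G,
     (\<lambda>C D. C \<in> cclasses G \<and> D \<in> cclasses G \<and> C \<noteq> D \<and> (\<exists>u\<in>C. \<exists>v\<in>D. adj G u v)))"

definition max_degree :: "'v graph \<Rightarrow> nat" where
  "max_degree G = maxn {card {u \<in> verts G. adj G v u} | v. v \<in> verts G}"

definition Delta_tilde :: "'v graph \<Rightarrow> nat" where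
  "Delta_tilde G = max_degree (quotient_graph G)"

definition omega_tilde :: "'v graph \<Rightarrow> nat" where
  "omega_tilde G = maxn {card {C \<in> cclasses G. C \<inter> K \<noteq> {}} | K. K \<in> max_cliques G}"

definition cideg :: "'v graph \<Rightarrow> nat" where
  "cideg G = maxn {card {K \<in> max_cliques G. v \<in> K} | v. v \<in> verts G}"

definition cdeg :: "'v graph \<Rightarrow> nat" where
  "cdeg G = maxn {card {K' \<in> max_cliques G. K' \<noteq> K \<and> K' \<inter> K \<noteq> {}} | K. K \<in> max_cliques G}"

definition alpha_star :: "'v graph \<Rightarrow> nat" where
  "alpha_star G = maxn {alpha_on G (closed_nbhd G v) | v. v \<in> verts G}"

definition theta_star :: "'v graph \<Rightarrow> nat" where
  "theta_star G = maxn {theta_on G (closed_nbhd G v) | v. v \<in> verts G}"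

text \<open>Vertices x_i, y_i (i = 1..n) and the centre c.\<close>
datatype pv = Xv nat | Yv nat | Cv

definition symcl :: "(pv \<Rightarrow> pv \<Rightarrow> bool) \<Rightarrow> pv \<Rightarrow> pv \<Rightarrow> bool" where
  "symcl R u v \<longleftrightarrow> u \<noteq> v \<and> (R u v \<or> R v u)"

definition XY :: "nat \<Rightarrow> pv set" where
  "XY n = Xv ` {1..n} \<union> Yv ` {1..n}"

definition star_seq :: "nat \<Rightarrow> pv graph" where
  "star_seq n = (insert Cv (Yv ` {1..n}),
     symcl (\<lambda>u v. case (u, v) of (Cv, Yv j) \<Rightarrow> 1 \<le> j \<and> j \<le> n | _ \<Rightarrow> False))"

definition MKI_seq :: "nat \<Rightarrow> pv graph" where
  "MKI_seq n = (XY n,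
     symcl (\<lambda>u v. case (u, v) of
        (Xv i, Yv j) \<Rightarrow> i \<in> {1..n} \<and> j \<in> {1..n} \<and> i = j
      | (Xv i, Xv j) \<Rightarrow> i \<in> {1..n} \<and> j \<in> {1..n}
      | _ \<Rightarrow> False))"

definition MKK_seq :: "nat \<Rightarrow> pv graph" where
  "MKK_seq n = (XY n,
     symcl (\<lambda>u v. case (u, v) of
        (Xv i, Yv j) \<Rightarrow> i \<in> {1..n} \<and> j \<in> {1..n} \<and> i = j
      | (Xv i, Xv j) \<Rightarrow> i \<in> {1..n} \<and> j \<in> {1..n}
      | (Yv i, Yv j) \<Rightarrow> i \<in> {1..n} \<and> j \<in> {1..n}
      | _ \<Rightarrow> False))"

definition AKK_seq :: "nat \<Rightarrow> pv graph" where
  "AKK_seq n = (XY n,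
     symcl (\<lambda>u v. case (u, v) of
        (Xv i, Yv j) \<Rightarrow> i \<in> {1..n} \<and> j \<in> {1..n} \<and> i \<noteq> j
      | (Xv i, Xv j) \<Rightarrow> i \<in> {1..n} \<and> j \<in> {1..n}
      | (Yv i, Yv j) \<Rightarrow> i \<in> {1..n} \<and> j \<in> {1..n}
      | _ \<Rightarrow> False))"

definition HKK_seq :: "nat \<Rightarrow> pv graph" where
  "HKK_seq n = (XY n,
     symcl (\<lambda>u v. case (u, v) of
        (Xv i, Yv j) \<Rightarrow> i \<in> {1..n} \<and> j \<in> {1..n} \<and> i \<le> j
      | (Xv i, Xv j) \<Rightarrow> i \<in> {1..n} \<and> j \<in> {1..n}
      | (Yv i, Yv j) \<Rightarrow> i \<in> {1..n} \<and> j \<in> {1..n}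
      | _ \<Rightarrow> False))"

definition induced_sub :: "'w graph \<Rightarrow> 'v graph \<Rightarrow> bool" where
  "induced_sub H G \<longleftrightarrow> (\<exists>\<phi>. inj_on \<phi> (verts H) \<and> \<phi> ` verts H \<subseteq> verts G \<and>
      (\<forall>u\<in>verts H. \<forall>v\<in>verts H. adj G (\<phi> u) (\<phi> v) \<longleftrightarrow> adj H u v))"

definition p_fam :: "(nat \<Rightarrow> pv graph) set \<Rightarrow> 'v graph \<Rightarrow> nat" where
  "p_fam F G = maxn {n. \<exists>X\<in>F. induced_sub (X n) G}"

definition frakB :: "(nat \<Rightarrow> pv graph) set" where
  "frakB = {MKI_seq, MKK_seq, AKK_seq, HKK_seq, star_seq}"

definition param_equiv :: "(nat graph \<Rightarrow> nat) \<Rightarrow> (nat graph \<Rightarrow> nat) \<Rightarrow> bool" where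
  "param_equiv p q \<longleftrightarrow> (\<exists>f g :: nat \<Rightarrow> nat. \<forall>G. fin_simple_graph G \<longrightarrow>
      p G \<le> f (q G) \<and> q G \<le> g (p G))"

end

theory Submission
  imports Defs "HOL-Library.Ramsey"
begin

lemma fsg_fin: "fin_simple_graph G \<Longrightarrow> finite (verts G)"
  by (simp add: fin_simple_graph_def)
lemma fsg_sym: "fin_simple_graph G \<Longrightarrow> adj G u v \<Longrightarrow> adj G v u"
  by (simp add: fin_simple_graph_def)
lemma fsg_irr: "fin_simple_graph G \<Longrightarrow> \<not> adj G v v"
  by (auto simp add: fin_simple_graph_def)
lemma fsg_in1: "fin_simple_graph G \<Longrightarrow> adj G u v \<Longrightarrow> u \<in> verts G"
  by (simp add: fin_simple_graph_def)
lemma fsg_in2: "fin_simple_graph G \<Longrightarrow> adj G u v \<Longrightarrow> v \<in> verts G"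
  by (simp add: fin_simple_graph_def)
lemma fsg_adj_sym: "fin_simple_graph G \<Longrightarrow> adj G u v = adj G v u"
  by (auto simp add: fin_simple_graph_def)

lemma maxn_ge: "finite S \<Longrightarrow> n \<in> S \<Longrightarrow> n \<le> maxn S"
  by (auto simp: maxn_def)

lemma maxn_le: "(\<And>n. n \<in> S \<Longrightarrow> n \<le> b) \<Longrightarrow> maxn S \<le> b"
proof -
  assume h: "\<And>n. n \<in> S \<Longrightarrow> n \<le> b"
  then have "S \<subseteq> {..b}" by auto
  then have "finite S" using finite_subset by blast
  then show ?thesis using h by (auto simp: maxn_def)
qed

lemma maxn_in: "finite S \<Longrightarrow> S \<noteq> {} \<Longrightarrow> maxn S \<in> S"
  by (auto simp: maxn_def)

lemma maxn_cases: "finite S \<Longrightarrow> maxn S = 0 \<or> maxn S \<in> S"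
  by (auto simp: maxn_def)

lemma max_clique_clique: "max_clique G K \<Longrightarrow> Defs.clique G K"
  by (simp add: max_clique_def)

lemma max_clique_sub: "max_clique G K \<Longrightarrow> K \<subseteq> verts G"
  by (simp add: max_clique_def Defs.clique_def)

lemma max_cliques_finite: "fin_simple_graph G \<Longrightarrow> finite (max_cliques G)"
proof -
  assume "fin_simple_graph G"
  then have "finite (Pow (verts G))" by (simp add: fsg_fin)
  moreover have "max_cliques G \<subseteq> Pow (verts G)"
    using max_clique_sub[of G] unfolding max_cliques_def by blast
  ultimately show ?thesis using finite_subset by blast
qed

lemma clique_extend:
  assumes G: "fin_simple_graph G" and C: "Defs.clique G C"
  shows "\<exists>K. max_clique G K \<and> C \<subseteq> K"
  using C
proof (induction "card (verts G) - card C" arbitrary: C rule: less_induct)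
  case less
  show ?case
  proof (cases "max_clique G C")
    case True then show ?thesis by blast
  next
    case False
    then obtain K' where K': "Defs.clique G K'" "C \<subseteq> K'" "K' \<noteq> C"
      using less.prems by (auto simp: max_clique_def)
    have fin: "finite (verts G)" using G by (simp add: fsg_fin)
    have "K' \<subseteq> verts G" using K' by (simp add: Defs.clique_def)
    then have "card K' \<le> card (verts G)" using fin card_mono by blast
    moreover have "card C < card K'"
      using K' \<open>K' \<subseteq> verts G\<close> fin by (intro psubset_card_mono) (auto intro: finite_subset)
    ultimately have "card (verts G) - card K' < card (verts G) - card C" by simp
    from less.hyps[OF this K'(1)] K'(2) show ?thesis by blast
  qed
qed

lemma vert_in_max_clique:
  assumes G: "fin_simple_graph G" and v: "v \<in> verts G"
  shows "\<exists>K. max_clique G K \<and> v \<in> K"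
proof -
  have "Defs.clique G {v}" using v by (simp add: Defs.clique_def)
  then show ?thesis using clique_extend[OF G] by blast
qed

lemma edge_in_max_clique:
  assumes G: "fin_simple_graph G" and e: "adj G u v"
  shows "\<exists>K. max_clique G K \<and> u \<in> K \<and> v \<in> K"
proof -
  have "Defs.clique G {u,v}" using e G
    by (auto simp: Defs.clique_def fsg_in1 fsg_in2 dest: fsg_sym)
  then show ?thesis using clique_extend[OF G] by blast
qed

lemma max_clique_adj: "max_clique G K \<Longrightarrow> u \<in> K \<Longrightarrow> v \<in> K \<Longrightarrow> u \<noteq> v \<Longrightarrow> adj G u v"
  by (auto simp: max_clique_def Defs.clique_def)

lemma not_in_max_clique:
  assumes G: "fin_simple_graph G" and K: "max_clique G K" and x: "x \<in> verts G" "x \<notin> K"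
  shows "\<exists>w\<in>K. w \<noteq> x \<and> \<not> adj G w x"
proof (rule ccontr)
  assume "\<not> ?thesis"
  then have h: "\<forall>w\<in>K. w \<noteq> x \<longrightarrow> adj G w x" by blast
  have "Defs.clique G (insert x K)"
    using K x h G unfolding max_clique_def Defs.clique_def by (auto dest: fsg_sym)
  then have "insert x K = K" using K by (auto simp: max_clique_def)
  then show False using x by blast
qed

section \<open>Clique equivalence\<close>

lemma cequiv_refl: "cequiv G u u" by (simp add: cequiv_def)
lemma cequiv_sym: "cequiv G u v \<Longrightarrow> cequiv G v u" by (simp add: cequiv_def)
lemma cequiv_trans: "cequiv G u v \<Longrightarrow> cequiv G v w \<Longrightarrow> cequiv G u w" by (simp add: cequiv_def)

lemma cequiv_mem: "cequiv G u v \<Longrightarrow> max_clique G K \<Longrightarrow> u \<in> K \<Longrightarrow> v \<in> K"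
  by (auto simp: cequiv_def max_cliques_def)

lemma cequiv_iff: "cequiv G u v \<longleftrightarrow> (\<forall>K. max_clique G K \<longrightarrow> (u \<in> K \<longleftrightarrow> v \<in> K))"
  by (auto simp: cequiv_def max_cliques_def)

lemma nonadj_not_cequiv:
  assumes G: "fin_simple_graph G" and u: "u \<in> verts G" and ne: "u \<noteq> v" and na: "\<not> adj G u v"
  shows "\<not> cequiv G u v"
proof
  assume e: "cequiv G u v"
  obtain K where K: "max_clique G K" "u \<in> K" using vert_in_max_clique[OF G u] by blast
  then have "v \<in> K" using cequiv_mem[OF e] by blast
  then show False using max_clique_adj[OF K(1) K(2) _ ne] na by blast
qed

lemma distinguish_not_cequiv:
  assumes G: "fin_simple_graph G" and a: "adj G w a" and b: "\<not> adj G w b" "w \<noteq> b"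
  shows "\<not> cequiv G a b"
proof
  assume e: "cequiv G a b"
  obtain K where K: "max_clique G K" "w \<in> K" "a \<in> K" using edge_in_max_clique[OF G a] by blast
  then have "b \<in> K" using cequiv_mem[OF e] by blast
  then show False using max_clique_adj[OF K(1) K(2) _ b(2)] b(1) by blast
qed

lemma cequiv_adj:
  assumes G: "fin_simple_graph G" and e: "cequiv G u v" and a: "adj G u w" and ne: "v \<noteq> w"
  shows "adj G v w"
proof -
  obtain K where K: "max_clique G K" "u \<in> K" "w \<in> K" using edge_in_max_clique[OF G a] by blast
  then have "v \<in> K" using cequiv_mem[OF e] by blast
  then show ?thesis using max_clique_adj[OF K(1) _ K(3) ne] by blast
qed

lemma cclass_mem: "u \<in> cclass G v \<longleftrightarrow> u \<in> verts G \<and> cequiv G u v"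
  by (simp add: cclass_def)

lemma cclass_self: "v \<in> verts G \<Longrightarrow> v \<in> cclass G v"
  by (simp add: cclass_def cequiv_refl)

lemma cclass_eq: "cequiv G u v \<Longrightarrow> cclass G u = cclass G v"
  by (auto simp: cclass_def intro: cequiv_trans cequiv_sym)

lemma cclass_eq_iff: "u \<in> verts G \<Longrightarrow> cclass G u = cclass G v \<longleftrightarrow> cequiv G u v"
  by (metis cclass_eq cclass_mem cclass_self)

lemma cclasses_finite: "fin_simple_graph G \<Longrightarrow> finite (cclasses G)"
  by (simp add: cclasses_def fsg_fin)

lemma cclass_of_mem: "C \<in> cclasses G \<Longrightarrow> u \<in> C \<Longrightarrow> C = cclass G u"
  by (auto simp: cclasses_def cclass_def intro: cequiv_trans cequiv_sym)

lemma cclass_sub: "cclass G v \<subseteq> verts G" by (auto simp: cclass_def)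

lemma cclasses_sub: "C \<in> cclasses G \<Longrightarrow> C \<subseteq> verts G"
  by (auto simp: cclasses_def cclass_def)

definition NQ :: "'v graph \<Rightarrow> 'v \<Rightarrow> 'v set set" where
  "NQ G v = {D \<in> cclasses G. adj (quotient_graph G) (cclass G v) D}"

definition CM :: "'v graph \<Rightarrow> 'v set \<Rightarrow> 'v set set" where
  "CM G K = {C \<in> cclasses G. C \<inter> K \<noteq> {}}"

lemma adjQ: "adj (quotient_graph G) C D \<longleftrightarrow>
   C \<in> cclasses G \<and> D \<in> cclasses G \<and> C \<noteq> D \<and> (\<exists>u\<in>C. \<exists>v\<in>D. adj G u v)"
  by (simp add: adj_def quotient_graph_def)

lemma vertsQ: "verts (quotient_graph G) = cclasses G"
  by (simp add: verts_def quotient_graph_def)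

lemma finite_NQ: "fin_simple_graph G \<Longrightarrow> finite (NQ G v)"
  by (simp add: NQ_def cclasses_finite)

lemma finite_CM: "fin_simple_graph G \<Longrightarrow> finite (CM G K)"
  by (simp add: CM_def cclasses_finite)

lemma NQ_le_Delta:
  assumes G: "fin_simple_graph G" and v: "v \<in> verts G"
  shows "card (NQ G v) \<le> Delta_tilde G"
proof -
  have "cclass G v \<in> cclasses G" using v by (simp add: cclasses_def)
  moreover have "finite {card {u \<in> verts (quotient_graph G). adj (quotient_graph G) C u} | C. C \<in> verts (quotient_graph G)}"
    using cclasses_finite[OF G] by (simp add: vertsQ)
  ultimately show ?thesis unfolding Delta_tilde_def max_degree_def NQ_def vertsQ
    by (intro maxn_ge) auto
qed

lemma card_cliques_le_cideg:
  assumes G: "fin_simple_graph G" and v: "v \<in> verts G"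
  shows "card {K \<in> max_cliques G. v \<in> K} \<le> cideg G"
  unfolding cideg_def using v fsg_fin[OF G] by (intro maxn_ge) auto

lemma CM_le_omega:
  assumes G: "fin_simple_graph G" and K: "max_clique G K"
  shows "card (CM G K) \<le> omega_tilde G"
  unfolding omega_tilde_def CM_def using K max_cliques_finite[OF G]
  by (intro maxn_ge) (auto simp: max_cliques_def)

lemma cdeg_ge:
  assumes G: "fin_simple_graph G" and K: "max_clique G K"
  shows "card {K' \<in> max_cliques G. K' \<noteq> K \<and> K' \<inter> K \<noteq> {}} \<le> cdeg G"
  unfolding cdeg_def using K max_cliques_finite[OF G]
  by (intro maxn_ge) (auto simp: max_cliques_def)

lemma CM_sub:
  assumes G: "fin_simple_graph G" and K: "max_clique G K" and u0: "u0 \<in> K"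
  shows "CM G K \<subseteq> insert (cclass G u0) (NQ G u0)"
proof
  fix C assume C: "C \<in> CM G K"
  then obtain u' where u': "u' \<in> C" "u' \<in> K" and Cc: "C \<in> cclasses G" by (auto simp: CM_def)
  have u0V: "u0 \<in> verts G" using max_clique_sub[OF K] u0 by blast
  show "C \<in> insert (cclass G u0) (NQ G u0)"
  proof (cases "C = cclass G u0")
    case True then show ?thesis by simp
  next
    case False
    have "u0 \<noteq> u'" using False cclass_of_mem[OF Cc u'(1)] by blast
    then have "adj G u0 u'" using max_clique_adj[OF K u0 u'(2)] by blast
    moreover have "cclass G u0 \<in> cclasses G" using u0V by (simp add: cclasses_def)
    ultimately show ?thesis using False Cc u'(1) cclass_self[OF u0V]
      by (auto simp: NQ_def adjQ)
  qed
qed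

lemma card_insert_NQ:
  assumes G: "fin_simple_graph G" and v: "v \<in> verts G"
  shows "card (insert (cclass G v) (NQ G v)) \<le> Delta_tilde G + 1"
proof -
  have "card (insert (cclass G v) (NQ G v)) \<le> card (NQ G v) + 1"
    using finite_NQ[OF G] by (simp add: card_insert_if)
  then show ?thesis using NQ_le_Delta[OF G v] by simp
qed

lemma omega_le_Delta:
  assumes G: "fin_simple_graph G"
  shows "omega_tilde G \<le> Delta_tilde G + 1"
  unfolding omega_tilde_def
proof (rule maxn_le)
  fix n assume "n \<in> {card {C \<in> cclasses G. C \<inter> K \<noteq> {}} |K. K \<in> max_cliques G}"
  then obtain K where K: "max_clique G K" and n: "n = card (CM G K)"
    by (auto simp: max_cliques_def CM_def)
  show "n \<le> Delta_tilde G + 1"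
  proof (cases "K = {}")
    case True then show ?thesis by (simp add: n CM_def)
  next
    case False
    then obtain u0 where u0: "u0 \<in> K" by blast
    have u0V: "u0 \<in> verts G" using max_clique_sub[OF K] u0 by blast
    have "card (CM G K) \<le> card (insert (cclass G u0) (NQ G u0))"
      using CM_sub[OF G K u0] finite_NQ[OF G] by (intro card_mono) auto
    then show ?thesis using card_insert_NQ[OF G u0V] n by simp
  qed
qed

lemma classes_determine_clique:
  assumes K: "max_clique G K" and K': "max_clique G K'" and e: "CM G K = CM G K'"
  shows "K \<subseteq> K'"
proof
  fix u assume u: "u \<in> K"
  have uV: "u \<in> verts G" using max_clique_sub[OF K] u by blast
  have "cclass G u \<in> CM G K" using u uV cclass_self[OF uV] by (auto simp: CM_def cclasses_def)
  then have "cclass G u \<in> CM G K'" using e by simp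
  then obtain u' where "u' \<in> cclass G u" "u' \<in> K'" by (auto simp: CM_def)
  then show "u \<in> K'" using cequiv_mem[OF _ K'] by (auto simp: cclass_mem)
qed

lemma CM_inj:
  assumes G: "fin_simple_graph G" and v: "v \<in> verts G"
  shows "inj_on (CM G) {K \<in> max_cliques G. v \<in> K}"
proof (rule inj_onI)
  fix K K' assume "K \<in> {K \<in> max_cliques G. v \<in> K}" "K' \<in> {K \<in> max_cliques G. v \<in> K}" "CM G K = CM G K'"
  then show "K = K'" using classes_determine_clique[of G K K'] classes_determine_clique[of G K' K]
    by (auto simp: max_cliques_def)
qed

lemma cideg_le_Delta:
  assumes G: "fin_simple_graph G"
  shows "cideg G \<le> 2 ^ (Delta_tilde G + 1)"
  unfolding cideg_def
proof (rule maxn_le)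
  fix n assume "n \<in> {card {K \<in> max_cliques G. v \<in> K} |v. v \<in> verts G}"
  then obtain v where v: "v \<in> verts G" and n: "n = card {K \<in> max_cliques G. v \<in> K}" by blast
  let ?S = "insert (cclass G v) (NQ G v)"
  have "CM G ` {K \<in> max_cliques G. v \<in> K} \<subseteq> Pow ?S"
    using CM_sub[OF G] by (auto simp: max_cliques_def)
  then have "n \<le> card (Pow ?S)"
    unfolding n using CM_inj[OF G v] finite_NQ[OF G]
    by (intro card_inj_on_le) auto
  also have "\<dots> = 2 ^ card ?S" using finite_NQ[OF G] by (simp add: card_Pow)
  also have "\<dots> \<le> 2 ^ (Delta_tilde G + 1)" using card_insert_NQ[OF G v] by (intro power_increasing) auto
  finally show "n \<le> 2 ^ (Delta_tilde G + 1)" .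
qed

lemma class_cliques_sub:
  assumes C: "C \<in> cclasses G"
  shows "\<exists>u\<in>verts G. {K' \<in> max_cliques G. C \<inter> K' \<noteq> {}} \<subseteq> {K' \<in> max_cliques G. u \<in> K'}"
proof -
  obtain u where u: "u \<in> verts G" "C = cclass G u" using C by (auto simp: cclasses_def)
  have "{K' \<in> max_cliques G. C \<inter> K' \<noteq> {}} \<subseteq> {K' \<in> max_cliques G. u \<in> K'}"
    using u cequiv_mem by (fastforce simp: cclass_mem max_cliques_def)
  then show ?thesis using u by blast
qed

lemma cdeg_le:
  assumes G: "fin_simple_graph G"
  shows "cdeg G \<le> omega_tilde G * cideg G"
  unfolding cdeg_def
proof (rule maxn_le)
  fix n assume "n \<in> {card {K' \<in> max_cliques G. K' \<noteq> K \<and> K' \<inter> K \<noteq> {}} |K. K \<in> max_cliques G}"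
  then obtain K where K: "max_clique G K" and n: "n = card {K' \<in> max_cliques G. K' \<noteq> K \<and> K' \<inter> K \<noteq> {}}"
    by (auto simp: max_cliques_def)
  have sub: "{K' \<in> max_cliques G. K' \<noteq> K \<and> K' \<inter> K \<noteq> {}} \<subseteq> (\<Union>C\<in>CM G K. {K' \<in> max_cliques G. C \<inter> K' \<noteq> {}})"
  proof
    fix K' assume "K' \<in> {K' \<in> max_cliques G. K' \<noteq> K \<and> K' \<inter> K \<noteq> {}}"
    then obtain u where u: "u \<in> K'" "u \<in> K" and K'm: "K' \<in> max_cliques G" by blast
    have uV: "u \<in> verts G" using max_clique_sub[OF K] u by blast
    have "cclass G u \<in> CM G K" using u uV cclass_self[OF uV] by (auto simp: CM_def cclasses_def)
    then show "K' \<in> (\<Union>C\<in>CM G K. {K' \<in> max_cliques G. C \<inter> K' \<noteq> {}})"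
      using K'm u cclass_self[OF uV] by blast
  qed
  have fin: "finite (CM G K)" using finite_CM[OF G] .
  have "n \<le> card (\<Union>C\<in>CM G K. {K' \<in> max_cliques G. C \<inter> K' \<noteq> {}})"
    unfolding n using sub max_cliques_finite[OF G] fin by (intro card_mono) auto
  also have "\<dots> \<le> (\<Sum>C\<in>CM G K. card {K' \<in> max_cliques G. C \<inter> K' \<noteq> {}})"
    by (rule card_UN_le[OF fin])
  also have "\<dots> \<le> (\<Sum>C\<in>CM G K. cideg G)"
  proof (rule sum_mono)
    fix C assume "C \<in> CM G K"
    then have "C \<in> cclasses G" by (simp add: CM_def)
    then obtain u where u: "u \<in> verts G" and s: "{K' \<in> max_cliques G. C \<inter> K' \<noteq> {}} \<subseteq> {K' \<in> max_cliques G. u \<in> K'}"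
      using class_cliques_sub by blast
    have "card {K' \<in> max_cliques G. C \<inter> K' \<noteq> {}} \<le> card {K' \<in> max_cliques G. u \<in> K'}"
      using s max_cliques_finite[OF G] by (intro card_mono) auto
    then show "card {K' \<in> max_cliques G. C \<inter> K' \<noteq> {}} \<le> cideg G"
      using card_cliques_le_cideg[OF G u] by simp
  qed
  also have "\<dots> = card (CM G K) * cideg G" by simp
  also have "\<dots> \<le> omega_tilde G * cideg G" using CM_le_omega[OF G K] by simp
  finally show "n \<le> omega_tilde G * cideg G" .
qed

lemma theta_le:
  assumes "finite F" "\<forall>C\<in>F. Defs.clique G C" "\<Union>F = S"
  shows "theta_on G S \<le> card F"
  unfolding theta_on_def using assms by (intro Least_le) blast

lemma theta_ex:
  assumes S: "S \<subseteq> verts G" "finite S"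
  shows "\<exists>F. finite F \<and> card F = theta_on G S \<and> (\<forall>C\<in>F. Defs.clique G C) \<and> \<Union>F = S"
proof -
  have "\<exists>k F. finite F \<and> card F = k \<and> (\<forall>C\<in>F. Defs.clique G C) \<and> \<Union>F = S"
    using S by (intro exI[of _ "card ((\<lambda>v. {v}) ` S)"] exI[of _ "(\<lambda>v. {v}) ` S"])
       (auto simp: Defs.clique_def)
  then show ?thesis unfolding theta_on_def by (rule LeastI_ex)
qed

lemma closed_nbhd_sub: "v \<in> verts G \<Longrightarrow> closed_nbhd G v \<subseteq> verts G"
  by (auto simp: closed_nbhd_def)

lemma theta_le_cideg:
  assumes G: "fin_simple_graph G"
  shows "theta_star G \<le> cideg G"
  unfolding theta_star_def
proof (rule maxn_le)
  fix n assume "n \<in> {theta_on G (closed_nbhd G v) |v. v \<in> verts G}"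
  then obtain v where v: "v \<in> verts G" and n: "n = theta_on G (closed_nbhd G v)" by blast
  let ?F = "{K \<in> max_cliques G. v \<in> K}"
  have "\<Union>?F = closed_nbhd G v"
  proof
    show "\<Union>?F \<subseteq> closed_nbhd G v"
    proof
      fix u assume "u \<in> \<Union>?F"
      then obtain K where K: "max_clique G K" "v \<in> K" "u \<in> K" by (auto simp: max_cliques_def)
      show "u \<in> closed_nbhd G v"
        using max_clique_adj[OF K(1) K(2) K(3)] max_clique_sub[OF K(1)] K(3)
        by (cases "u = v") (auto simp: closed_nbhd_def)
    qed
  next
    show "closed_nbhd G v \<subseteq> \<Union>?F"
    proof
      fix u assume u: "u \<in> closed_nbhd G v"
      show "u \<in> \<Union>?F"
      proof (cases "u = v")
        case True then show ?thesis using vert_in_max_clique[OF G v] by (auto simp: max_cliques_def)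
      next
        case False
        then have "adj G v u" using u by (auto simp: closed_nbhd_def)
        then show ?thesis using edge_in_max_clique[OF G] by (fastforce simp: max_cliques_def)
      qed
    qed
  qed
  moreover have finF: "finite ?F" using max_cliques_finite[OF G] by simp
  ultimately have "n \<le> card ?F" unfolding n
    by (intro theta_le) (auto simp: max_cliques_def max_clique_def)
  then show "n \<le> cideg G" using card_cliques_le_cideg[OF G v] by simp
qed

lemma alpha_le_theta_on:
  assumes G: "fin_simple_graph G" and S: "S \<subseteq> verts G"
  shows "alpha_on G S \<le> theta_on G S"
  unfolding alpha_on_def
proof (rule maxn_le)
  have finS: "finite S" using S fsg_fin[OF G] finite_subset by blast
  obtain F where F: "finite F" "card F = theta_on G S" "\<forall>C\<in>F. Defs.clique G C" "\<Union>F = S"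
    using theta_ex[OF S finS] by blast
  fix n assume "n \<in> {card I |I. I \<subseteq> S \<and> Defs.indep G I}"
  then obtain I where I: "I \<subseteq> S" "Defs.indep G I" and n: "n = card I" by blast
  define f where "f u = (SOME C. C \<in> F \<and> u \<in> C)" for u
  have f: "f u \<in> F \<and> u \<in> f u" if "u \<in> I" for u
  proof -
    have "\<exists>C. C \<in> F \<and> u \<in> C" using that I F(4) by blast
    then show ?thesis unfolding f_def by (rule someI_ex)
  qed
  have "inj_on f I"
  proof (rule inj_onI)
    fix a b assume ab: "a \<in> I" "b \<in> I" "f a = f b"
    show "a = b"
    proof (rule ccontr)
      assume "a \<noteq> b"
      then have "adj G a b" using f[OF ab(1)] f[OF ab(2)] ab(3) F(3) by (auto simp: Defs.clique_def)
      then show False using I(2) ab by (auto simp: Defs.indep_def)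
    qed
  qed
  then have "card I \<le> card F" using f F(1) by (intro card_inj_on_le) auto
  then show "n \<le> theta_on G S" using n F(2) by simp
qed

lemma alpha_le_theta:
  assumes G: "fin_simple_graph G"
  shows "alpha_star G \<le> theta_star G"
  unfolding alpha_star_def
proof (rule maxn_le)
  fix n assume "n \<in> {alpha_on G (closed_nbhd G v) |v. v \<in> verts G}"
  then obtain v where v: "v \<in> verts G" and n: "n = alpha_on G (closed_nbhd G v)" by blast
  have "n \<le> theta_on G (closed_nbhd G v)" using alpha_le_theta_on[OF G closed_nbhd_sub[OF v]] n by simp
  also have "\<dots> \<le> theta_star G" unfolding theta_star_def using v fsg_fin[OF G]
    by (intro maxn_ge) auto
  finally show "n \<le> theta_star G" .
qed

lemma cideg_le_cdeg:
  assumes G: "fin_simple_graph G"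
  shows "cideg G \<le> cdeg G + 1"
  unfolding cideg_def
proof (rule maxn_le)
  fix n assume "n \<in> {card {K \<in> max_cliques G. v \<in> K} |v. v \<in> verts G}"
  then obtain v where v: "v \<in> verts G" and n: "n = card {K \<in> max_cliques G. v \<in> K}" by blast
  obtain K0 where K0: "max_clique G K0" "v \<in> K0" using vert_in_max_clique[OF G v] by blast
  have "{K \<in> max_cliques G. v \<in> K} \<subseteq> insert K0 {K' \<in> max_cliques G. K' \<noteq> K0 \<and> K' \<inter> K0 \<noteq> {}}"
    using K0 by auto
  then have "n \<le> card (insert K0 {K' \<in> max_cliques G. K' \<noteq> K0 \<and> K' \<inter> K0 \<noteq> {}})"
    unfolding n using max_cliques_finite[OF G] by (intro card_mono) auto
  also have "\<dots> \<le> card {K' \<in> max_cliques G. K' \<noteq> K0 \<and> K' \<inter> K0 \<noteq> {}} + 1"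
    using max_cliques_finite[OF G] by (simp add: card_insert_if)
  also have "\<dots> \<le> cdeg G + 1" using cdeg_ge[OF G K0(1)] by simp
  finally show "n \<le> cdeg G + 1" .
qed

lemma omega_le_cdeg:
  assumes G: "fin_simple_graph G"
  shows "omega_tilde G \<le> 2 ^ (cdeg G + 1)"
  unfolding omega_tilde_def
proof (rule maxn_le)
  fix n assume "n \<in> {card {C \<in> cclasses G. C \<inter> K \<noteq> {}} |K. K \<in> max_cliques G}"
  then obtain K where K: "max_clique G K" and n: "n = card (CM G K)"
    by (auto simp: max_cliques_def CM_def)
  let ?S = "insert K {K' \<in> max_cliques G. K' \<noteq> K \<and> K' \<inter> K \<noteq> {}}"
  let ?f = "\<lambda>C. {K' \<in> max_cliques G. C \<inter> K' \<noteq> {}}"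
  have img: "?f ` CM G K \<subseteq> Pow ?S"
  proof
    fix X assume "X \<in> ?f ` CM G K"
    then obtain C where C: "C \<in> CM G K" and X: "X = ?f C" by blast
    then obtain b where b: "b \<in> C" "b \<in> K" and Cc: "C \<in> cclasses G" by (auto simp: CM_def)
    have "K' \<in> ?S" if "K' \<in> X" for K'
    proof -
      from that X obtain a where a: "a \<in> C" "a \<in> K'" and K'm: "max_clique G K'" by (auto simp: max_cliques_def)
      have "cequiv G a b" using a(1) b(1) Cc by (auto simp: cclasses_def cclass_def intro: cequiv_trans cequiv_sym)
      then have "b \<in> K'" using cequiv_mem[OF _ K'm a(2)] by blast
      then show ?thesis using b(2) K'm by (auto simp: max_cliques_def)
    qed
    then show "X \<in> Pow ?S" by blast
  qed
  have inj: "inj_on ?f (CM G K)"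
  proof (rule inj_onI)
    fix C C' assume C: "C \<in> CM G K" and C': "C' \<in> CM G K" and e: "?f C = ?f C'"
    obtain u where u: "u \<in> verts G" "C = cclass G u" using C by (auto simp: CM_def cclasses_def)
    obtain u' where u': "u' \<in> verts G" "C' = cclass G u'" using C' by (auto simp: CM_def cclasses_def)
    have eq1: "?f C = {K' \<in> max_cliques G. u \<in> K'}"
      using u cclass_self[OF u(1)] cequiv_mem by (fastforce simp: cclass_mem max_cliques_def)
    have eq2: "?f C' = {K' \<in> max_cliques G. u' \<in> K'}"
      using u' cclass_self[OF u'(1)] cequiv_mem by (fastforce simp: cclass_mem max_cliques_def)
    have "cequiv G u u'" using e eq1 eq2 by (simp add: cequiv_def)
    then show "C = C'" using u u' cclass_eq by simp
  qed
  have finS: "finite ?S" using max_cliques_finite[OF G] by simp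
  have "n \<le> card (Pow ?S)" unfolding n using img inj finS by (intro card_inj_on_le) auto
  also have "\<dots> = 2 ^ card ?S" using finS by (simp add: card_Pow)
  also have "\<dots> \<le> 2 ^ (cdeg G + 1)"
  proof (intro power_increasing)
    have "card ?S \<le> card {K' \<in> max_cliques G. K' \<noteq> K \<and> K' \<inter> K \<noteq> {}} + 1"
      using max_cliques_finite[OF G] by (simp add: card_insert_if)
    then show "card ?S \<le> cdeg G + 1" using cdeg_ge[OF G K] by simp
  qed auto
  finally show "n \<le> 2 ^ (cdeg G + 1)" .
qed

lemma verts_seq:
  "verts (MKI_seq n) = XY n" "verts (MKK_seq n) = XY n" "verts (AKK_seq n) = XY n"
  "verts (HKK_seq n) = XY n" "verts (star_seq n) = insert Cv (Yv ` {1..n})"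
  by (simp_all add: verts_def MKI_seq_def MKK_seq_def AKK_seq_def HKK_seq_def star_seq_def)

lemma adj_MKI:
  "adj (MKI_seq n) (Xv i) (Xv j) = (i \<noteq> j \<and> i \<in> {1..n} \<and> j \<in> {1..n})"
  "adj (MKI_seq n) (Xv i) (Yv j) = (i \<in> {1..n} \<and> j \<in> {1..n} \<and> i = j)"
  "adj (MKI_seq n) (Yv j) (Xv i) = (i \<in> {1..n} \<and> j \<in> {1..n} \<and> i = j)"
  "adj (MKI_seq n) (Yv i) (Yv j) = False"
  by (auto simp: adj_def MKI_seq_def symcl_def)

lemma adj_MKK:
  "adj (MKK_seq n) (Xv i) (Xv j) = (i \<noteq> j \<and> i \<in> {1..n} \<and> j \<in> {1..n})"
  "adj (MKK_seq n) (Xv i) (Yv j) = (i \<in> {1..n} \<and> j \<in> {1..n} \<and> i = j)"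
  "adj (MKK_seq n) (Yv j) (Xv i) = (i \<in> {1..n} \<and> j \<in> {1..n} \<and> i = j)"
  "adj (MKK_seq n) (Yv i) (Yv j) = (i \<noteq> j \<and> i \<in> {1..n} \<and> j \<in> {1..n})"
  by (auto simp: adj_def MKK_seq_def symcl_def)

lemma adj_AKK:
  "adj (AKK_seq n) (Xv i) (Xv j) = (i \<noteq> j \<and> i \<in> {1..n} \<and> j \<in> {1..n})"
  "adj (AKK_seq n) (Xv i) (Yv j) = (i \<in> {1..n} \<and> j \<in> {1..n} \<and> i \<noteq> j)"
  "adj (AKK_seq n) (Yv j) (Xv i) = (i \<in> {1..n} \<and> j \<in> {1..n} \<and> i \<noteq> j)"
  "adj (AKK_seq n) (Yv i) (Yv j) = (i \<noteq> j \<and> i \<in> {1..n} \<and> j \<in> {1..n})"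
  by (auto simp: adj_def AKK_seq_def symcl_def)

lemma adj_HKK:
  "adj (HKK_seq n) (Xv i) (Xv j) = (i \<noteq> j \<and> i \<in> {1..n} \<and> j \<in> {1..n})"
  "adj (HKK_seq n) (Xv i) (Yv j) = (i \<in> {1..n} \<and> j \<in> {1..n} \<and> i \<le> j)"
  "adj (HKK_seq n) (Yv j) (Xv i) = (i \<in> {1..n} \<and> j \<in> {1..n} \<and> i \<le> j)"
  "adj (HKK_seq n) (Yv i) (Yv j) = (i \<noteq> j \<and> i \<in> {1..n} \<and> j \<in> {1..n})"
  by (auto simp: adj_def HKK_seq_def symcl_def)

lemma adj_star:
  "adj (star_seq n) Cv (Yv j) = (1 \<le> j \<and> j \<le> n)"
  "adj (star_seq n) (Yv j) Cv = (1 \<le> j \<and> j \<le> n)"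
  "adj (star_seq n) (Yv i) (Yv j) = False"
  "adj (star_seq n) Cv Cv = False"
  by (auto simp: adj_def star_seq_def symcl_def)

lemma XY_mem: "Xv i \<in> XY n \<longleftrightarrow> i \<in> {1..n}" "Yv i \<in> XY n \<longleftrightarrow> i \<in> {1..n}" "Cv \<notin> XY n"
  by (auto simp: XY_def)

lemma induced_sub_bound:
  assumes G: "fin_simple_graph G" and H: "induced_sub H G" and sub: "Yv ` {1..n} \<subseteq> verts H"
  shows "n \<le> card (verts G)"
proof -
  obtain \<phi> where \<phi>: "inj_on \<phi> (verts H)" "\<phi> ` verts H \<subseteq> verts G"
    using H by (auto simp: induced_sub_def)
  have "inj_on (\<phi> \<circ> Yv) {1..n}" using \<phi>(1) sub by (auto simp: inj_on_def)
  then have "card ((\<phi> \<circ> Yv) ` {1..n}) = n" using card_image by fastforce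
  moreover have "(\<phi> \<circ> Yv) ` {1..n} \<subseteq> verts G" using \<phi>(2) sub by auto
  ultimately show ?thesis using fsg_fin[OF G] card_mono by metis
qed

lemma frakB_Yv: "X \<in> frakB \<Longrightarrow> Yv ` {1..n} \<subseteq> verts (X n)"
  by (auto simp: frakB_def verts_seq XY_def)

lemma p_ge:
  assumes G: "fin_simple_graph G" and X: "X \<in> frakB" and H: "induced_sub (X n) G"
  shows "n \<le> p_fam frakB G"
proof -
  have "{n. \<exists>X\<in>frakB. induced_sub (X n) G} \<subseteq> {..card (verts G)}"
    using induced_sub_bound[OF G _ frakB_Yv] by blast
  then have "finite {n. \<exists>X\<in>frakB. induced_sub (X n) G}" using finite_subset by blast
  then show ?thesis unfolding p_fam_def using X H by (intro maxn_ge) auto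
qed

lemma p_le:
  assumes "\<And>n X. X \<in> frakB \<Longrightarrow> induced_sub (X n) G \<Longrightarrow> n \<le> b"
  shows "p_fam frakB G \<le> b"
  unfolding p_fam_def using assms by (intro maxn_le) auto

section \<open>Lower bounds on alpha_star and omega_tilde\<close>

lemma omega_ge:
  assumes G: "fin_simple_graph G"
    and xV: "\<forall>i\<in>{1..n}. x i \<in> verts G"
    and xa: "\<forall>i\<in>{1..n}. \<forall>j\<in>{1..n}. i \<noteq> j \<longrightarrow> adj G (x i) (x j)"
    and xe: "\<forall>i\<in>{1..n}. \<forall>j\<in>{1..n}. i \<noteq> j \<longrightarrow> \<not> cequiv G (x i) (x j)"
  shows "n \<le> omega_tilde G"
proof -
  have cl: "Defs.clique G (x ` {1..n})" unfolding Defs.clique_def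
  proof (intro conjI ballI impI)
    show "x ` {1..n} \<subseteq> verts G" using xV by blast
  next
    fix u v assume u: "u \<in> x ` {1..n}" and v: "v \<in> x ` {1..n}" and uv: "u \<noteq> v"
    from u obtain i where i: "i \<in> {1..n}" "u = x i" by blast
    from v obtain j where j: "j \<in> {1..n}" "v = x j" by blast
    have "i \<noteq> j" using uv i j by blast
    then show "adj G u v" using xa i j by simp
  qed
  obtain K where K: "max_clique G K" "x ` {1..n} \<subseteq> K" using clique_extend[OF G cl] by blast
  have inj: "inj_on (\<lambda>i. cclass G (x i)) {1..n}"
  proof (rule inj_onI)
    fix i j assume ij: "i \<in> {1..n}" "j \<in> {1..n}" "cclass G (x i) = cclass G (x j)"
    have xi: "x i \<in> verts G" using xV ij(1) by blast
    have "cequiv G (x i) (x j)" using ij(3) by (simp only: cclass_eq_iff[OF xi])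
    then show "i = j" using xe ij(1,2) by blast
  qed
  have "cclass G (x i) \<in> CM G K" if "i \<in> {1..n}" for i
  proof -
    have xi: "x i \<in> verts G" using xV that by blast
    have "x i \<in> cclass G (x i) \<inter> K" using cclass_self[OF xi] K(2) that by blast
    then show ?thesis using xi unfolding CM_def cclasses_def by blast
  qed
  then have "(\<lambda>i. cclass G (x i)) ` {1..n} \<subseteq> CM G K" by blast
  then have "card ((\<lambda>i. cclass G (x i)) ` {1..n}) \<le> card (CM G K)"
    by (rule card_mono[OF finite_CM[OF G]])
  then have "n \<le> card (CM G K)" using card_image[OF inj] by simp
  then show ?thesis using CM_le_omega[OF G K(1)] by simp
qed

lemma alpha_ge:
  assumes G: "fin_simple_graph G" and c: "c \<in> verts G"
    and ya: "\<forall>i\<in>{1..n}. adj G c (y i)"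
    and yi: "inj_on y {1..n}"
    and yn: "\<forall>i\<in>{1..n}. \<forall>j\<in>{1..n}. \<not> adj G (y i) (y j)"
  shows "n \<le> alpha_star G"
proof -
  let ?I = "y ` {1..n}"
  have I: "?I \<subseteq> closed_nbhd G c" "Defs.indep G ?I"
    using ya yn G by (auto simp: closed_nbhd_def Defs.indep_def fsg_in2)
  have fin: "finite {card I |I. I \<subseteq> closed_nbhd G c \<and> Defs.indep G I}"
  proof -
    have "finite (closed_nbhd G c)" using closed_nbhd_sub[OF c] fsg_fin[OF G] finite_subset by blast
    then have "finite (card ` Pow (closed_nbhd G c))" by simp
    moreover have "{card I |I. I \<subseteq> closed_nbhd G c \<and> Defs.indep G I} \<subseteq> card ` Pow (closed_nbhd G c)" by auto
    ultimately show ?thesis using finite_subset by blast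
  qed
  have "n = card ?I" using card_image[OF yi] by simp
  also have "\<dots> \<le> alpha_on G (closed_nbhd G c)" unfolding alpha_on_def using I fin
    by (intro maxn_ge) auto
  also have "\<dots> \<le> alpha_star G" unfolding alpha_star_def using c fsg_fin[OF G]
    by (intro maxn_ge) auto
  finally show ?thesis .
qed

lemma induced_subE:
  assumes "induced_sub H G"
  obtains \<phi> where "inj_on \<phi> (verts H)" "\<phi> ` verts H \<subseteq> verts G"
    "\<And>u v. u \<in> verts H \<Longrightarrow> v \<in> verts H \<Longrightarrow> adj G (\<phi> u) (\<phi> v) = adj H u v"
  using assms by (auto simp: induced_sub_def)

lemma adjXX: "X \<in> {MKI_seq, MKK_seq, AKK_seq, HKK_seq} \<Longrightarrow>
   adj (X n) (Xv i) (Xv j) = (i \<noteq> j \<and> i \<in> {1..n} \<and> j \<in> {1..n})"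
  by (auto simp only: insert_iff empty_iff adj_MKI adj_MKK adj_AKK adj_HKK)

lemma vertsXY: "X \<in> {MKI_seq, MKK_seq, AKK_seq, HKK_seq} \<Longrightarrow> verts (X n) = XY n"
  by (auto simp only: insert_iff empty_iff verts_seq)

lemma p_le_Sm:
  assumes G: "fin_simple_graph G"
  shows "p_fam frakB G \<le> max (alpha_star G) (omega_tilde G)"
proof (rule p_le)
  fix n X assume X: "X \<in> frakB" and H: "induced_sub (X n) G"
  from H obtain \<phi> where \<phi>0: "inj_on \<phi> (verts (X n)) \<and> \<phi> ` verts (X n) \<subseteq> verts G \<and>
      (\<forall>u\<in>verts (X n). \<forall>v\<in>verts (X n). adj G (\<phi> u) (\<phi> v) \<longleftrightarrow> adj (X n) u v)"
    unfolding induced_sub_def by (elim exE)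
  have \<phi>: "inj_on \<phi> (verts (X n))" "\<phi> ` verts (X n) \<subseteq> verts G"
    "\<And>u v. u \<in> verts (X n) \<Longrightarrow> v \<in> verts (X n) \<Longrightarrow> adj G (\<phi> u) (\<phi> v) = adj (X n) u v"
    using \<phi>0 by auto
  define x where "x i = \<phi> (Xv i)" for i
  define y where "y i = \<phi> (Yv i)" for i
  show "n \<le> max (alpha_star G) (omega_tilde G)"
  proof (cases "X = star_seq")
    case True
    have VS: "verts (X n) = insert Cv (Yv ` {1..n})" by (simp add: True verts_seq)
    have c: "\<phi> Cv \<in> verts G" using \<phi>(2) VS by blast
    have "n \<le> alpha_star G"
    proof (rule alpha_ge[OF G c])
      show "\<forall>i\<in>{1..n}. adj G (\<phi> Cv) (y i)"
      proof
        fix i assume i: "i \<in> {1..n}"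
        have "adj G (\<phi> Cv) (\<phi> (Yv i)) = adj (X n) Cv (Yv i)" using \<phi>(3) VS i by blast
        then show "adj G (\<phi> Cv) (y i)" using i by (simp add: y_def True adj_star)
      qed
      show "inj_on y {1..n}"
      proof (rule inj_onI)
        fix i j assume "i \<in> {1..n}" "j \<in> {1..n}" "y i = y j"
        then show "i = j" using \<phi>(1) VS unfolding y_def inj_on_def by blast
      qed
      show "\<forall>i\<in>{1..n}. \<forall>j\<in>{1..n}. \<not> adj G (y i) (y j)"
      proof (intro ballI)
        fix i j assume "i \<in> {1..n}" "j \<in> {1..n}"
        then have "adj G (y i) (y j) = adj (X n) (Yv i) (Yv j)" using \<phi>(3) VS unfolding y_def by blast
        then show "\<not> adj G (y i) (y j)" by (simp add: True adj_star)
      qed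
    qed
    then show ?thesis by simp
  next
    case False
    then have X4: "X \<in> {MKI_seq, MKK_seq, AKK_seq, HKK_seq}"
      using X by (simp add: frakB_def)
    have V: "verts (X n) = XY n" using vertsXY[OF X4] .
    have xV: "\<forall>i\<in>{1..n}. x i \<in> verts G" using \<phi>(2) unfolding x_def V XY_def by blast
    have ax: "adj G (x i) (x j) = (i \<noteq> j)" if "i \<in> {1..n}" "j \<in> {1..n}" for i j
    proof -
      have "adj G (x i) (x j) = adj (X n) (Xv i) (Xv j)" using \<phi>(3)[of "Xv i" "Xv j"] that by (simp add: x_def V XY_mem)
      then show ?thesis using adjXX[OF X4] that by simp
    qed
    have axy: "adj G (x i) (y j) = adj (X n) (Xv i) (Yv j)" if "i \<in> {1..n}" "j \<in> {1..n}" for i j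
      using \<phi>(3)[of "Xv i" "Yv j"] that by (simp add: x_def y_def V XY_mem)
    have ne: "y j \<noteq> x i" if "i \<in> {1..n}" "j \<in> {1..n}" for i j
    proof
      assume "y j = x i"
      moreover have "Yv j \<in> verts (X n)" "Xv i \<in> verts (X n)" using that by (simp_all add: V XY_mem)
      ultimately have "Yv j = Xv i" using \<phi>(1) unfolding x_def y_def inj_on_def by blast
      then show False by simp
    qed
    have sym: "adj G (y j) (x i) = adj G (x i) (y j)" for i j using fsg_adj_sym[OF G] by blast
    have dist: "\<not> cequiv G (x i) (x j)" if ij: "i \<in> {1..n}" "j \<in> {1..n}" "i < j" for i j
    proof -
      have "\<exists>w. (adj G w (x i) \<and> \<not> adj G w (x j) \<and> w \<noteq> x j) \<or> (adj G w (x j) \<and> \<not> adj G w (x i) \<and> w \<noteq> x i)"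
      proof -
        consider "X = MKI_seq" | "X = MKK_seq" | "X = AKK_seq" | "X = HKK_seq" using X4 by blast
        then show ?thesis
        proof cases
          case 1
          have a: "adj G (x i) (y i)" using axy[of i i] ij by (simp add: 1 adj_MKI)
          have b: "\<not> adj G (x j) (y i)" using axy[of j i] ij by (simp add: 1 adj_MKI)
          have "adj G (y i) (x i) \<and> \<not> adj G (y i) (x j) \<and> y i \<noteq> x j"
            using a b ne[of j i] ij sym[of i i] sym[of i j] by simp
          then show ?thesis by blast
        next
          case 2
          have a: "adj G (x i) (y i)" using axy[of i i] ij by (simp add: 2 adj_MKK)
          have b: "\<not> adj G (x j) (y i)" using axy[of j i] ij by (simp add: 2 adj_MKK)
          have "adj G (y i) (x i) \<and> \<not> adj G (y i) (x j) \<and> y i \<noteq> x j"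
            using a b ne[of j i] ij sym[of i i] sym[of i j] by simp
          then show ?thesis by blast
        next
          case 3
          have a: "adj G (x i) (y j)" using axy[of i j] ij by (simp add: 3 adj_AKK)
          have b: "\<not> adj G (x j) (y j)" using axy[of j j] ij by (simp add: 3 adj_AKK)
          have "adj G (y j) (x i) \<and> \<not> adj G (y j) (x j) \<and> y j \<noteq> x j"
            using a b ne[of j j] ij sym[of j i] sym[of j j] by simp
          then show ?thesis by blast
        next
          case 4
          have a: "adj G (x i) (y i)" using axy[of i i] ij by (simp add: 4 adj_HKK)
          have b: "\<not> adj G (x j) (y i)" using axy[of j i] ij by (simp add: 4 adj_HKK)
          have "adj G (y i) (x i) \<and> \<not> adj G (y i) (x j) \<and> y i \<noteq> x j"
            using a b ne[of j i] ij sym[of i i] sym[of i j] by simp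
          then show ?thesis by blast
        qed
      qed
      then obtain w where w: "(adj G w (x i) \<and> \<not> adj G w (x j) \<and> w \<noteq> x j) \<or> (adj G w (x j) \<and> \<not> adj G w (x i) \<and> w \<noteq> x i)"
        by (elim exE)
      show ?thesis
      proof (cases "adj G w (x i) \<and> \<not> adj G w (x j) \<and> w \<noteq> x j")
        case True
        then have a: "adj G w (x i)" and b: "\<not> adj G w (x j)" and c: "w \<noteq> x j" by simp_all
        show ?thesis by (rule distinguish_not_cequiv[OF G a b c])
      next
        case False
        then have "adj G w (x j) \<and> \<not> adj G w (x i) \<and> w \<noteq> x i" using w by (elim disjE) simp_all
        then have a: "adj G w (x j)" and b: "\<not> adj G w (x i)" and c: "w \<noteq> x i" by simp_all
        have "\<not> cequiv G (x j) (x i)" by (rule distinguish_not_cequiv[OF G a b c])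
        then show ?thesis using cequiv_sym by metis
      qed
    qed
    have xe: "\<forall>i\<in>{1..n}. \<forall>j\<in>{1..n}. i \<noteq> j \<longrightarrow> \<not> cequiv G (x i) (x j)"
    proof (intro ballI impI)
      fix i j assume ij: "i \<in> {1..n}" "j \<in> {1..n}" "i \<noteq> j"
      show "\<not> cequiv G (x i) (x j)"
      proof (cases "i < j")
        case True then show ?thesis using dist[OF ij(1,2) True] by simp
      next
        case False then have "j < i" using ij by simp
        then have "\<not> cequiv G (x j) (x i)" using dist[OF ij(2,1)] by simp
        then show ?thesis using cequiv_sym by metis
      qed
    qed
    have xa: "\<forall>i\<in>{1..n}. \<forall>j\<in>{1..n}. i \<noteq> j \<longrightarrow> adj G (x i) (x j)" using ax by blast
    have "n \<le> omega_tilde G" using omega_ge[OF G xV xa xe] .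
    then show ?thesis by simp
  qed
qed

section \<open>Chain lemma\<close>

lemma chain_lemma:
  "finite F \<Longrightarrow> 2 ^ L \<le> card F \<Longrightarrow>
   \<exists>w d A. (\<forall>k<L. A k \<in> F \<and> w k \<in> \<Union>F \<and> (w k \<in> A k \<longleftrightarrow> \<not> d k)) \<and>
           (\<forall>i k. i < k \<longrightarrow> k < L \<longrightarrow> (w i \<in> A k \<longleftrightarrow> d i))"
proof (induction L arbitrary: F)
  case 0
  then show ?case by auto
next
  case (Suc L)
  have "(1::nat) \<le> 2 ^ L" by simp
  then have h2: "2 * 1 \<le> 2 * (2::nat) ^ L" by (rule mult_le_mono2)
  have "Suc 1 \<le> card F" using h2 Suc.prems(2) by (simp only: power_Suc)
  then obtain a B where aB: "F = insert a B" "a \<notin> B" "1 \<le> card B" "finite B"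
    unfolding card_le_Suc_iff by blast
  then obtain b where "b \<in> B" by fastforce
  then obtain B1 B2 where B: "B1 \<in> F" "B2 \<in> F" "B1 \<noteq> B2" using aB by blast
  then obtain w0 where w0: "(w0 \<in> B1 \<and> w0 \<notin> B2) \<or> (w0 \<in> B2 \<and> w0 \<notin> B1)" by blast
  define Fb where "Fb b = {S \<in> F. (w0 \<in> S) = b}" for b
  have finFb: "finite (Fb b)" for b using Suc.prems(1) by (simp add: Fb_def)
  have "Fb True \<union> Fb False = F" "Fb True \<inter> Fb False = {}" by (auto simp: Fb_def)
  then have "card (Fb True) + card (Fb False) = card F"
    using finFb card_Un_disjoint by metis
  then have "\<exists>b. 2 ^ L \<le> card (Fb b)" using Suc.prems(2)
  proof -
    assume sum: "card (Fb True) + card (Fb False) = card F"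
    show ?thesis
    proof (rule ccontr)
      assume "\<not> ?thesis"
      then have "card (Fb True) < 2 ^ L" "card (Fb False) < 2 ^ L" by (auto simp: not_le)
      then show False using sum Suc.prems(2) by simp
    qed
  qed
  then obtain b where b: "2 ^ L \<le> card (Fb b)" by blast
  have "\<exists>A0. A0 \<in> F \<and> (w0 \<in> A0) = (\<not> b)"
    using w0 B by (cases b) auto
  then obtain A0 where A0: "A0 \<in> F" "(w0 \<in> A0) = (\<not> b)" by blast
  obtain w' d' A' where IH: "\<forall>k<L. A' k \<in> Fb b \<and> w' k \<in> \<Union>(Fb b) \<and> (w' k \<in> A' k \<longleftrightarrow> \<not> d' k)"
    "\<forall>i k. i < k \<longrightarrow> k < L \<longrightarrow> (w' i \<in> A' k \<longleftrightarrow> d' i)"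
    using Suc.IH[OF finFb b] by blast
  define w where "w k = (if k = 0 then w0 else w' (k - 1))" for k
  define d where "d k = (if k = 0 then b else d' (k - 1))" for k
  define A where "A k = (if k = 0 then A0 else A' (k - 1))" for k
  have w0U: "w0 \<in> \<Union>F" using w0 B by blast
  have sub: "Fb b \<subseteq> F" by (auto simp: Fb_def)
  have P1: "A k \<in> F \<and> w k \<in> \<Union>F \<and> (w k \<in> A k \<longleftrightarrow> \<not> d k)" if k: "k < Suc L" for k
  proof (cases "k = 0")
    case True then show ?thesis using A0 w0U by (simp add: w_def d_def A_def)
  next
    case False
    then have "k - 1 < L" using k by simp
    then show ?thesis using IH(1) sub False by (auto simp: w_def d_def A_def)
  qed
  have P2: "w i \<in> A k \<longleftrightarrow> d i" if ik: "i < k" "k < Suc L" for i k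
  proof (cases "i = 0")
    case True
    have "k - 1 < L" "k \<noteq> 0" using ik by auto
    then have "A' (k - 1) \<in> Fb b" using IH(1) by blast
    then show ?thesis using True \<open>k \<noteq> 0\<close> by (simp add: w_def d_def A_def Fb_def)
  next
    case False
    have "i - 1 < k - 1" "k - 1 < L" "k \<noteq> 0" using ik False by auto
    then show ?thesis using IH(2) False by (simp add: w_def d_def A_def)
  qed
  show ?case using P1 P2 by blast
qed

lemma ramsey_sym:
  "\<exists>r. \<forall>(S::'a set) (P::'a \<Rightarrow> 'a \<Rightarrow> bool). finite S \<and> r \<le> card S \<and> (\<forall>a b. P a b = P b a) \<longrightarrow>
     (\<exists>T\<subseteq>S. card T = m \<and> ((\<forall>a\<in>T. \<forall>b\<in>T. a \<noteq> b \<longrightarrow> P a b) \<or> (\<forall>a\<in>T. \<forall>b\<in>T. a \<noteq> b \<longrightarrow> \<not> P a b)))"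
proof -
  obtain r where r: "\<forall>(V::'a set) (E::'a set set). finite V \<and> card V \<ge> r \<longrightarrow>
    (\<exists>R \<subseteq> V. card R = m \<and> Ramsey.clique R E \<or> card R = m \<and> Ramsey.indep R E)"
    using ramsey2[of m m] by blast
  have "\<exists>T\<subseteq>S. card T = m \<and> ((\<forall>a\<in>T. \<forall>b\<in>T. a \<noteq> b \<longrightarrow> P a b) \<or> (\<forall>a\<in>T. \<forall>b\<in>T. a \<noteq> b \<longrightarrow> \<not> P a b))"
    if S: "finite S" "r \<le> card S" and P: "\<forall>a b. P a b = P b a" for S :: "'a set" and P
  proof -
    define E where "E = {{a, b} | a b. P a b}"
    have E: "{a, b} \<in> E \<longleftrightarrow> P a b" for a b
    proof
      assume "{a, b} \<in> E"
      then obtain a' b' where "{a, b} = {a', b'}" "P a' b'" by (auto simp: E_def)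
      then show "P a b" using P by (metis doubleton_eq_iff)
    qed (auto simp: E_def)
    obtain R where R: "R \<subseteq> S" "card R = m \<and> Ramsey.clique R E \<or> card R = m \<and> Ramsey.indep R E"
      using r S by blast
    then show ?thesis using E unfolding Ramsey.clique_def Ramsey.indep_def by blast
  qed
  then show ?thesis by blast
qed

lemma enum_set:
  assumes "finite (T::nat set)" "card T = Suc n"
  shows "\<exists>t. (\<forall>a\<le>n. t a \<in> T) \<and> (\<forall>a b. a < b \<longrightarrow> b \<le> n \<longrightarrow> t a < t b)"
proof -
  define xs where "xs = sorted_list_of_set T"
  have len: "length xs = Suc n" using assms by (simp add: xs_def)
  have sw: "sorted_wrt (<) xs" by (simp add: xs_def)
  have set: "set xs = T" using assms by (simp add: xs_def)
  show ?thesis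
  proof (intro exI[of _ "\<lambda>a. xs ! a"] conjI allI impI)
    fix a assume "a \<le> n" then show "xs ! a \<in> T" using len set nth_mem by (metis le_imp_less_Suc)
  next
    fix a b assume "a < b" "b \<le> n" then show "xs ! a < xs ! b" using sorted_wrt_nth_less[OF sw] len by simp
  qed
qed

section \<open>Embedding lemmas\<close>

lemma embed_XY:
  assumes G: "fin_simple_graph G"
    and VH: "verts H = XY n"
    and HXX: "\<And>i j. i \<in> {1..n} \<Longrightarrow> j \<in> {1..n} \<Longrightarrow> adj H (Xv i) (Xv j) = (i \<noteq> j)"
    and HYY: "\<And>i j. i \<in> {1..n} \<Longrightarrow> j \<in> {1..n} \<Longrightarrow> adj H (Yv i) (Yv j) = (cY \<and> i \<noteq> j)"
    and HXY: "\<And>i j. i \<in> {1..n} \<Longrightarrow> j \<in> {1..n} \<Longrightarrow> adj H (Xv i) (Yv j) = R i j"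
    and HYX: "\<And>i j. i \<in> {1..n} \<Longrightarrow> j \<in> {1..n} \<Longrightarrow> adj H (Yv j) (Xv i) = R i j"
    and xV: "\<And>i. i \<in> {1..n} \<Longrightarrow> x i \<in> verts G"
    and yV: "\<And>i. i \<in> {1..n} \<Longrightarrow> y i \<in> verts G"
    and xi: "\<And>i j. i \<in> {1..n} \<Longrightarrow> j \<in> {1..n} \<Longrightarrow> x i = x j \<Longrightarrow> i = j"
    and yi: "\<And>i j. i \<in> {1..n} \<Longrightarrow> j \<in> {1..n} \<Longrightarrow> y i = y j \<Longrightarrow> i = j"
    and xy: "\<And>i j. i \<in> {1..n} \<Longrightarrow> j \<in> {1..n} \<Longrightarrow> x i \<noteq> y j"
    and GXX: "\<And>i j. i \<in> {1..n} \<Longrightarrow> j \<in> {1..n} \<Longrightarrow> i \<noteq> j \<Longrightarrow> adj G (x i) (x j)"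
    and GYY: "\<And>i j. i \<in> {1..n} \<Longrightarrow> j \<in> {1..n} \<Longrightarrow> i \<noteq> j \<Longrightarrow> adj G (y i) (y j) = cY"
    and GXY: "\<And>i j. i \<in> {1..n} \<Longrightarrow> j \<in> {1..n} \<Longrightarrow> adj G (x i) (y j) = R i j"
  shows "induced_sub H G"
proof -
  define \<phi> where "\<phi> u = (case u of Xv i \<Rightarrow> x i | Yv j \<Rightarrow> y j | Cv \<Rightarrow> x 0)" for u
  have mem: "u \<in> XY n \<longleftrightarrow> (\<exists>i\<in>{1..n}. u = Xv i) \<or> (\<exists>i\<in>{1..n}. u = Yv i)" for u
    by (auto simp: XY_def)
  have inj: "inj_on \<phi> (verts H)"
  proof (rule inj_onI)
    fix u v assume u: "u \<in> verts H" and v: "v \<in> verts H" and e: "\<phi> u = \<phi> v"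
    from u v show "u = v" unfolding VH mem
    proof (elim disjE bexE)
      fix i j assume i: "i \<in> {1..n}" "u = Xv i" and j: "j \<in> {1..n}" "v = Xv j"
      then have "x i = x j" using e by (simp add: \<phi>_def)
      then show "u = v" using xi[OF i(1) j(1)] i(2) j(2) by simp
    next
      fix i j assume i: "i \<in> {1..n}" "u = Xv i" and j: "j \<in> {1..n}" "v = Yv j"
      then have "x i = y j" using e by (simp add: \<phi>_def)
      then show "u = v" using xy[OF i(1) j(1)] by simp
    next
      fix i j assume i: "i \<in> {1..n}" "u = Yv i" and j: "j \<in> {1..n}" "v = Xv j"
      then have "x j = y i" using e by (simp add: \<phi>_def)
      then show "u = v" using xy[OF j(1) i(1)] by simp
    next
      fix i j assume i: "i \<in> {1..n}" "u = Yv i" and j: "j \<in> {1..n}" "v = Yv j"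
      then have "y i = y j" using e by (simp add: \<phi>_def)
      then show "u = v" using yi[OF i(1) j(1)] i(2) j(2) by simp
    qed
  qed
  have img: "\<phi> ` verts H \<subseteq> verts G"
    unfolding VH using xV yV by (auto simp: \<phi>_def XY_def)
  have adjeq: "adj G (\<phi> u) (\<phi> v) = adj H u v" if u: "u \<in> verts H" and v: "v \<in> verts H" for u v
  proof -
    have irr: "\<not> adj G a a" for a using fsg_irr[OF G] .
    from u v show ?thesis unfolding VH mem
    proof (elim disjE bexE)
      fix i j assume i: "i \<in> {1..n}" "u = Xv i" and j: "j \<in> {1..n}" "v = Xv j"
      then show ?thesis using GXX[OF i(1) j(1)] HXX[OF i(1) j(1)] irr by (cases "i = j") (simp_all add: \<phi>_def)
    next
      fix i j assume i: "i \<in> {1..n}" "u = Xv i" and j: "j \<in> {1..n}" "v = Yv j"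
      then show ?thesis using GXY[OF i(1) j(1)] HXY[OF i(1) j(1)] by (simp add: \<phi>_def)
    next
      fix i j assume i: "i \<in> {1..n}" "u = Yv i" and j: "j \<in> {1..n}" "v = Xv j"
      then show ?thesis using GXY[OF j(1) i(1)] HYX[OF j(1) i(1)] fsg_adj_sym[OF G, of "y i" "x j"]
        by (simp add: \<phi>_def)
    next
      fix i j assume i: "i \<in> {1..n}" "u = Yv i" and j: "j \<in> {1..n}" "v = Yv j"
      then show ?thesis using GYY[OF i(1) j(1)] HYY[OF i(1) j(1)] irr by (cases "i = j") (simp_all add: \<phi>_def)
    qed
  qed
  show ?thesis unfolding induced_sub_def using inj img adjeq by blast
qed

lemma embed_star:
  assumes G: "fin_simple_graph G"
    and c: "c \<in> verts G"
    and yV: "\<And>i. i \<in> {1..n} \<Longrightarrow> y i \<in> verts G"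
    and yi: "\<And>i j. i \<in> {1..n} \<Longrightarrow> j \<in> {1..n} \<Longrightarrow> y i = y j \<Longrightarrow> i = j"
    and yc: "\<And>i. i \<in> {1..n} \<Longrightarrow> y i \<noteq> c"
    and ca: "\<And>i. i \<in> {1..n} \<Longrightarrow> adj G c (y i)"
    and yn: "\<And>i j. i \<in> {1..n} \<Longrightarrow> j \<in> {1..n} \<Longrightarrow> \<not> adj G (y i) (y j)"
  shows "induced_sub (star_seq n) G"
proof -
  define \<phi> where "\<phi> u = (case u of Yv j \<Rightarrow> y j | _ \<Rightarrow> c)" for u
  have mem: "u \<in> verts (star_seq n) \<longleftrightarrow> u = Cv \<or> (\<exists>i\<in>{1..n}. u = Yv i)" for u
    by (auto simp: verts_seq)
  have inj: "inj_on \<phi> (verts (star_seq n))"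
  proof (rule inj_onI)
    fix u v assume u: "u \<in> verts (star_seq n)" and v: "v \<in> verts (star_seq n)" and e: "\<phi> u = \<phi> v"
    from u v show "u = v" unfolding mem
    proof (elim disjE bexE)
      fix j assume j: "j \<in> {1..n}" "v = Yv j" and "u = Cv"
      then show "u = v" using e yc[OF j(1)] by (simp add: \<phi>_def)
    next
      fix i assume i: "i \<in> {1..n}" "u = Yv i" and "v = Cv"
      then show "u = v" using e yc[OF i(1)] by (simp add: \<phi>_def)
    next
      fix i j assume i: "i \<in> {1..n}" "u = Yv i" and j: "j \<in> {1..n}" "v = Yv j"
      then have "y i = y j" using e by (simp add: \<phi>_def)
      then show "u = v" using yi[OF i(1) j(1)] i(2) j(2) by simp
    qed simp
  qed
  have img: "\<phi> ` verts (star_seq n) \<subseteq> verts G"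
    using c yV by (auto simp: \<phi>_def verts_seq)
  have adjeq: "adj G (\<phi> u) (\<phi> v) = adj (star_seq n) u v" if u: "u \<in> verts (star_seq n)" and v: "v \<in> verts (star_seq n)" for u v
  proof -
    from u v show ?thesis unfolding mem
    proof (elim disjE bexE)
      assume "u = Cv" "v = Cv"
      then show ?thesis using fsg_irr[OF G] by (simp add: \<phi>_def adj_star)
    next
      fix j assume j: "j \<in> {1..n}" "v = Yv j" and "u = Cv"
      then show ?thesis using ca[OF j(1)] by (simp add: \<phi>_def adj_star)
    next
      fix i assume i: "i \<in> {1..n}" "u = Yv i" and "v = Cv"
      then show ?thesis using ca[OF i(1)] fsg_adj_sym[OF G, of c "y i"] by (simp add: \<phi>_def adj_star)
    next
      fix i j assume i: "i \<in> {1..n}" "u = Yv i" and j: "j \<in> {1..n}" "v = Yv j"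
      then show ?thesis using yn[OF i(1) j(1)] by (simp add: \<phi>_def adj_star)
    qed
  qed
  show ?thesis unfolding induced_sub_def using inj img adjeq by blast
qed

lemma final_cases:
  assumes G: "fin_simple_graph G"
    and xV: "\<And>a. a \<le> n \<Longrightarrow> xx a \<in> verts G"
    and wV: "\<And>a. a \<le> n \<Longrightarrow> ww a \<in> verts G"
    and xinj: "\<And>a b. a \<le> n \<Longrightarrow> b \<le> n \<Longrightarrow> xx a = xx b \<Longrightarrow> a = b"
    and winj: "\<And>a b. a \<le> n \<Longrightarrow> b \<le> n \<Longrightarrow> ww a = ww b \<Longrightarrow> a = b"
    and xw: "\<And>a b. a \<le> n \<Longrightarrow> b \<le> n \<Longrightarrow> xx a \<noteq> ww b"
    and XX: "\<And>a b. a \<le> n \<Longrightarrow> b \<le> n \<Longrightarrow> a \<noteq> b \<Longrightarrow> adj G (xx a) (xx b)"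
    and WW: "\<And>a b. a \<le> n \<Longrightarrow> b \<le> n \<Longrightarrow> a \<noteq> b \<Longrightarrow> adj G (ww a) (ww b) = c2"
    and XW: "\<And>a b. a \<le> n \<Longrightarrow> b \<le> n \<Longrightarrow>
              adj G (xx a) (ww b) = (if a = b then \<not> b0 else if b < a then b0 else c1)"
  shows "n \<le> p_fam frakB G"
proof -
  have inB: "MKI_seq \<in> frakB" "MKK_seq \<in> frakB" "AKK_seq \<in> frakB" "HKK_seq \<in> frakB" "star_seq \<in> frakB"
    by (simp_all add: frakB_def)
  have rng: "i \<in> {1..n} \<Longrightarrow> i \<le> n" for i by simp
  consider "\<not> b0 \<and> \<not> c1" | "b0 \<and> c1" | "b0 \<and> \<not> c1" | "\<not> b0 \<and> c1" by blast
  then show ?thesis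
  proof cases
    case 1
    have XW': "adj G (xx i) (ww j) = (i = j)" if "i \<le> n" "j \<le> n" for i j
      using XW[OF that] 1 by auto
    show ?thesis
    proof (cases c2)
      case True
      have "induced_sub (MKK_seq n) G"
      proof (rule embed_XY[OF G, where x = xx and y = ww and R = "\<lambda>i j. i = j" and cY = True])
      qed (auto simp: verts_seq adj_MKK intro: xV wV xinj winj simp: xw XX WW[THEN iffD2] XW'[THEN iffD2]
             dest: XW'[THEN iffD1] WW[THEN iffD1] simp: True)
      then show ?thesis using p_ge[OF G inB(2)] by blast
    next
      case False
      have "induced_sub (MKI_seq n) G"
      proof (rule embed_XY[OF G, where x = xx and y = ww and R = "\<lambda>i j. i = j" and cY = False])
      qed (auto simp: verts_seq adj_MKI intro: xV wV xinj winj simp: xw XX XW'[THEN iffD2]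
             dest: XW'[THEN iffD1] WW[THEN iffD1] simp: False)
      then show ?thesis using p_ge[OF G inB(1)] by blast
    qed
  next
    case 2
    have XW': "adj G (xx i) (ww j) = (i \<noteq> j)" if "i \<le> n" "j \<le> n" for i j
      using XW[OF that] 2 by auto
    show ?thesis
    proof (cases c2)
      case True
      have "induced_sub (AKK_seq n) G"
      proof (rule embed_XY[OF G, where x = xx and y = ww and R = "\<lambda>i j. i \<noteq> j" and cY = True])
      qed (auto simp: verts_seq adj_AKK intro: xV wV xinj winj simp: xw XX WW[THEN iffD2] XW'[THEN iffD2]
             dest: XW'[THEN iffD1] WW[THEN iffD1] simp: True)
      then show ?thesis using p_ge[OF G inB(3)] by blast
    next
      case False
      have "induced_sub (star_seq n) G"
      proof (rule embed_star[OF G xV[of 0], where y = ww])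
        fix i j assume "i \<in> {1..n}" "j \<in> {1..n}"
        then have le: "i \<le> n" "j \<le> n" by auto
        show "\<not> adj G (ww i) (ww j)"
        proof (cases "i = j")
          case True then show ?thesis using fsg_irr[OF G] by simp
        next
          case False then show ?thesis using WW[OF le False] \<open>\<not> c2\<close> by simp
        qed
      next
        fix i assume "i \<in> {1..n}"
        then have le: "0 \<le> n" "i \<le> n" "0 < i" "0 \<noteq> i" by auto
        show "adj G (xx 0) (ww i)" using XW'[OF le(1,2)] le(3,4) by simp
      next
        fix i assume "i \<in> {1..n}"
        then have le: "0 \<le> n" "i \<le> n" by auto
        show "ww i \<noteq> xx 0" using xw[OF le] by metis
      qed (auto intro: wV winj)
      then show ?thesis using p_ge[OF G inB(5)] by blast
    qed
  next
    case 3
    have XW': "adj G (xx i) (ww j) = (j < i)" if "i \<le> n" "j \<le> n" for i j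
      using XW[OF that] 3 by auto
    show ?thesis
    proof (cases c2)
      case True
      have "induced_sub (HKK_seq n) G"
      proof (rule embed_XY[OF G, where x = "\<lambda>i. xx (n + 1 - i)" and y = "\<lambda>j. ww (n - j)" and R = "\<lambda>i j. i \<le> j" and cY = True])
        fix i j assume ij: "i \<in> {1..n}" "j \<in> {1..n}"
        have le: "n + 1 - i \<le> n" "n - j \<le> n" using ij by auto
        have "adj G (xx (n + 1 - i)) (ww (n - j)) = (n - j < n + 1 - i)" using XW'[OF le] .
        also have "\<dots> = (i \<le> j)" using ij by auto
        finally show "adj G (xx (n + 1 - i)) (ww (n - j)) = (i \<le> j)" .
      next
        fix i j assume ij: "i \<in> {1..n}" "j \<in> {1..n}" "xx (n + 1 - i) = xx (n + 1 - j)"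
        have le: "n + 1 - i \<le> n" "n + 1 - j \<le> n" using ij by auto
        have "n + 1 - i = n + 1 - j" using xinj[OF le ij(3)] .
        then show "i = j" using ij(1,2) by (auto simp: atLeastAtMost_iff)
      next
        fix i j assume ij: "i \<in> {1..n}" "j \<in> {1..n}" "ww (n - i) = ww (n - j)"
        then have le: "n - i \<le> n" "n - j \<le> n" by auto
        have "n - i = n - j" using winj[OF le ij(3)] .
        then show "i = j" using ij(1,2) by (auto simp: atLeastAtMost_iff)
      next
        fix i j assume ij: "i \<in> {1..n}" "j \<in> {1..n}" "i \<noteq> j"
        have le: "n - i \<le> n" "n - j \<le> n" "n - i \<noteq> n - j" using ij by (auto simp: atLeastAtMost_iff)
        show "adj G (ww (n - i)) (ww (n - j)) = True" using WW[OF le] True by simp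
      next
        fix i j assume ij: "i \<in> {1..n}" "j \<in> {1..n}" "i \<noteq> j"
        have le: "n + 1 - i \<le> n" "n + 1 - j \<le> n" "n + 1 - i \<noteq> n + 1 - j" using ij by auto
        show "adj G (xx (n + 1 - i)) (xx (n + 1 - j))" using XX[OF le] .
      qed (auto simp: verts_seq adj_HKK xw intro: xV wV)
      then show ?thesis using p_ge[OF G inB(4)] by blast
    next
      case False
      have "induced_sub (star_seq n) G"
      proof (rule embed_star[OF G xV[of n], where y = "\<lambda>j. ww (j - 1)"])
        fix i j assume "i \<in> {1..n}" "j \<in> {1..n}"
        then have le: "i - 1 \<le> n" "j - 1 \<le> n" "i \<noteq> j \<Longrightarrow> i - 1 \<noteq> j - 1" by auto
        show "\<not> adj G (ww (i - 1)) (ww (j - 1))"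
        proof (cases "i = j")
          case True then show ?thesis using fsg_irr[OF G] by simp
        next
          case False then show ?thesis using WW[OF le(1,2) le(3)[OF False]] \<open>\<not> c2\<close> by simp
        qed
      next
        fix i j assume ij: "i \<in> {1..n}" "j \<in> {1..n}" "ww (i - 1) = ww (j - 1)"
        then have le: "i - 1 \<le> n" "j - 1 \<le> n" by auto
        have "i - 1 = j - 1" using winj[OF le ij(3)] .
        then show "i = j" using ij(1,2) by (auto simp: atLeastAtMost_iff)
      next
        fix i assume "i \<in> {1..n}"
        then have le: "n \<le> n" "i - 1 \<le> n" "i - 1 < n" by auto
        show "adj G (xx n) (ww (i - 1))" using XW'[OF le(1,2)] le(3) by simp
      next
        fix i assume "i \<in> {1..n}"
        then have le: "n \<le> n" "i - 1 \<le> n" by auto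
        show "ww (i - 1) \<noteq> xx n" using xw[OF le] by metis
      qed (auto intro: wV)
      then show ?thesis using p_ge[OF G inB(5)] by blast
    qed
  next
    case 4
    have XW': "adj G (xx i) (ww j) = (i \<le> j)" if "i \<le> n" "j \<le> n" for i j
      using XW[OF that] 4 by auto
    show ?thesis
    proof (cases c2)
      case True
      have "induced_sub (HKK_seq n) G"
      proof (rule embed_XY[OF G, where x = xx and y = ww and R = "\<lambda>i j. i \<le> j" and cY = True])
        fix i j assume ij: "i \<in> {1..n}" "j \<in> {1..n}"
        then have le: "i \<le> n" "j \<le> n" by auto
        show "adj G (xx i) (ww j) = (i \<le> j)" using XW'[OF le] .
      next
        fix i j assume ij: "i \<in> {1..n}" "j \<in> {1..n}" "xx i = xx j"
        then have le: "i \<le> n" "j \<le> n" by auto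
        show "i = j" using xinj[OF le ij(3)] .
      next
        fix i j assume ij: "i \<in> {1..n}" "j \<in> {1..n}" "ww i = ww j"
        then have le: "i \<le> n" "j \<le> n" by auto
        show "i = j" using winj[OF le ij(3)] .
      next
        fix i j assume ij: "i \<in> {1..n}" "j \<in> {1..n}" "i \<noteq> j"
        then have le: "i \<le> n" "j \<le> n" by auto
        show "adj G (ww i) (ww j) = True" using WW[OF le ij(3)] True by simp
      next
        fix i j assume ij: "i \<in> {1..n}" "j \<in> {1..n}" "i \<noteq> j"
        then have le: "i \<le> n" "j \<le> n" by auto
        show "adj G (xx i) (xx j)" using XX[OF le ij(3)] .
      qed (auto simp: verts_seq adj_HKK xw intro: xV wV)
      then show ?thesis using p_ge[OF G inB(4)] by blast
    next
      case False
      have "induced_sub (star_seq n) G"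
      proof (rule embed_star[OF G xV[of 0], where y = ww])
        fix i j assume "i \<in> {1..n}" "j \<in> {1..n}"
        then have le: "i \<le> n" "j \<le> n" by auto
        show "\<not> adj G (ww i) (ww j)"
        proof (cases "i = j")
          case True then show ?thesis using fsg_irr[OF G] by simp
        next
          case False then show ?thesis using WW[OF le False] \<open>\<not> c2\<close> by simp
        qed
      next
        fix i assume "i \<in> {1..n}"
        then have le: "0 \<le> n" "i \<le> n" "0 < i" "0 \<noteq> i" by auto
        show "adj G (xx 0) (ww i)" using XW'[OF le(1,2)] le(3,4) by simp
      next
        fix i assume "i \<in> {1..n}"
        then have le: "0 \<le> n" "i \<le> n" by auto
        show "ww i \<noteq> xx 0" using xw[OF le] by metis
      qed (auto intro: wV winj)
      then show ?thesis using p_ge[OF G inB(5)] by blast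
    qed
  qed
qed

lemma trace_distinct:
  assumes G: "fin_simple_graph G" and K: "max_clique G K" and a: "a \<in> K" and b: "b \<notin> K" "b \<in> verts G"
    and ab: "adj G a b" and X: "\<forall>u\<in>X. \<forall>v\<in>X. u \<noteq> v \<longrightarrow> adj G u v" and bX: "b \<in> X"
  shows "\<exists>w. w \<in> verts G \<and> w \<notin> X \<and> adj G a w \<and> \<not> adj G b w"
proof -
  obtain w where w: "w \<in> K" "w \<noteq> b" "\<not> adj G w b" using not_in_max_clique[OF G K b(2,1)] by blast
  have "w \<noteq> a" using w(3) ab by blast
  then have "adj G a w" using max_clique_adj[OF K a w(1)] by blast
  moreover have "w \<in> verts G" using max_clique_sub[OF K] w(1) by blast
  moreover have "w \<notin> X" using X bX w(2,3) by blast
  moreover have "\<not> adj G b w" using w(3) fsg_adj_sym[OF G] by blast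
  ultimately show ?thesis by blast
qed

lemma traces_bound:
  "\<exists>M. \<forall>(G::'v graph) X. fin_simple_graph G \<and> X \<subseteq> verts G \<and> M \<le> card X \<and>
      (\<forall>a\<in>X. \<forall>b\<in>X. a \<noteq> b \<longrightarrow> adj G a b) \<and> (\<forall>a\<in>X. \<forall>b\<in>X. a \<noteq> b \<longrightarrow> \<not> cequiv G a b)
      \<longrightarrow> n \<le> p_fam frakB G"
proof -
  obtain r2 where r2: "\<forall>(S::nat set) (P::nat \<Rightarrow> nat \<Rightarrow> bool). finite S \<and> r2 \<le> card S \<and> (\<forall>a b. P a b = P b a) \<longrightarrow>
     (\<exists>T\<subseteq>S. card T = Suc n \<and> ((\<forall>a\<in>T. \<forall>b\<in>T. a \<noteq> b \<longrightarrow> P a b) \<or> (\<forall>a\<in>T. \<forall>b\<in>T. a \<noteq> b \<longrightarrow> \<not> P a b)))"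
    using ramsey_sym[of "Suc n"] by blast
  obtain r1 where r1: "\<forall>(S::nat set) (P::nat \<Rightarrow> nat \<Rightarrow> bool). finite S \<and> r1 \<le> card S \<and> (\<forall>a b. P a b = P b a) \<longrightarrow>
     (\<exists>T\<subseteq>S. card T = r2 \<and> ((\<forall>a\<in>T. \<forall>b\<in>T. a \<noteq> b \<longrightarrow> P a b) \<or> (\<forall>a\<in>T. \<forall>b\<in>T. a \<noteq> b \<longrightarrow> \<not> P a b)))"
    using ramsey_sym[of r2] by blast
  define L where "L = 2 * r1"
  have main: "n \<le> p_fam frakB G"
    if G: "fin_simple_graph G" and XV: "X \<subseteq> verts G" and cardX: "2 ^ L \<le> card X"
      and Xa: "\<forall>a\<in>X. \<forall>b\<in>X. a \<noteq> b \<longrightarrow> adj G a b"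
      and Xe: "\<forall>a\<in>X. \<forall>b\<in>X. a \<noteq> b \<longrightarrow> \<not> cequiv G a b" for G :: "'v graph" and X
  proof -
    have finX: "finite X" using XV fsg_fin[OF G] finite_subset by blast
    define T where "T x = {w \<in> verts G. adj G x w} - X" for x
    have Tinj: "inj_on T X"
    proof (rule inj_onI)
      fix a b assume a: "a \<in> X" and b: "b \<in> X" and e: "T a = T b"
      show "a = b"
      proof (rule ccontr)
        assume ne: "a \<noteq> b"
        then have nq: "\<not> cequiv G a b" using Xe a b by blast
        then obtain K where K: "max_clique G K" and "\<not> (a \<in> K \<longleftrightarrow> b \<in> K)"
          unfolding cequiv_iff by blast
        then consider "a \<in> K" "b \<notin> K" | "b \<in> K" "a \<notin> K" by blast
        then show False
        proof cases
          case 1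
          have ab: "adj G a b" using Xa a b ne by blast
          obtain w where "w \<in> verts G" "w \<notin> X" "adj G a w" "\<not> adj G b w"
            using trace_distinct[OF G K 1(1) 1(2) _ ab Xa b] XV b by blast
          then have "w \<in> T a" "w \<notin> T b" by (auto simp: T_def)
          then show False using e by blast
        next
          case 2
          have ab: "adj G b a" using Xa a b ne[symmetric] by blast
          obtain w where "w \<in> verts G" "w \<notin> X" "adj G b w" "\<not> adj G a w"
            using trace_distinct[OF G K 2(1) 2(2) _ ab Xa a] XV a by blast
          then have "w \<in> T b" "w \<notin> T a" by (auto simp: T_def)
          then show False using e by blast
        qed
      qed
    qed
    define F where "F = T ` X"
    have finF: "finite F" using finX by (simp add: F_def)
    have cardF: "2 ^ L \<le> card F" using cardX card_image[OF Tinj] by (simp add: F_def)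
    obtain w d A where ch: "\<forall>k<L. A k \<in> F \<and> w k \<in> \<Union>F \<and> (w k \<in> A k \<longleftrightarrow> \<not> d k)"
      "\<forall>i k. i < k \<longrightarrow> k < L \<longrightarrow> (w i \<in> A k \<longleftrightarrow> d i)"
      using chain_lemma[OF finF cardF] by blast
    define x where "x k = inv_into X T (A k)" for k
    have xX: "x k \<in> X" and Tx: "T (x k) = A k" if "k < L" for k
    proof -
      have "A k \<in> T ` X" using ch(1) that by (simp add: F_def)
      then show "x k \<in> X" "T (x k) = A k" unfolding x_def
        by (rule inv_into_into, rule f_inv_into_f)
    qed
    have wV: "w k \<in> verts G" and wX: "w k \<notin> X" if "k < L" for k
    proof -
      have "w k \<in> \<Union>F" using ch(1) that by blast
      then show "w k \<in> verts G" "w k \<notin> X" by (auto simp: F_def T_def)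
    qed
    have key: "adj G (x k) (w j) \<longleftrightarrow> w j \<in> A k" if "k < L" "j < L" for k j
      using Tx[OF that(1)] wV[OF that(2)] wX[OF that(2)] by (auto simp: T_def)
    define S where "S b = {k. k < L \<and> d k = b}" for b
    have fS: "finite (S b)" for b by (simp add: S_def)
    have "S True \<union> S False = {..<L}" "S True \<inter> S False = {}" by (auto simp: S_def)
    then have "card (S True) + card (S False) = L"
      using card_Un_disjoint[OF fS fS, of True False] by simp
    then have "\<exists>b0. r1 \<le> card (S b0)" unfolding L_def
    proof -
      assume sum: "card (S True) + card (S False) = 2 * r1"
      show ?thesis
      proof (rule ccontr)
        assume "\<not> ?thesis"
        then have "card (S True) < r1" "card (S False) < r1" by (auto simp: not_le)
        then show False using sum by linarith
      qed
    qed
    then obtain b0 where b0: "r1 \<le> card (S b0)" by blast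
    have finS: "finite (S b0)" by (simp add: S_def)
    define P1 where "P1 a c = (if a < c then w c \<in> A a else w a \<in> A c)" for a c
    have P1s: "\<forall>a c. P1 a c = P1 c a"
    proof (intro allI)
      fix a c :: nat
      consider "a < c" | "c < a" | "a = c" by linarith
      then show "P1 a c = P1 c a" by cases (simp_all add: P1_def)
    qed
    obtain T1 where T1: "T1 \<subseteq> S b0" "card T1 = r2"
      "(\<forall>a\<in>T1. \<forall>b\<in>T1. a \<noteq> b \<longrightarrow> P1 a b) \<or> (\<forall>a\<in>T1. \<forall>b\<in>T1. a \<noteq> b \<longrightarrow> \<not> P1 a b)"
      using spec[OF spec[OF r1, of "S b0"], of P1] finS b0 P1s by blast
    define c1 where "c1 = (\<forall>a\<in>T1. \<forall>b\<in>T1. a \<noteq> b \<longrightarrow> P1 a b)"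
    have c1h: "P1 a b = c1" if "a \<in> T1" "b \<in> T1" "a \<noteq> b" for a b
      using T1(3) that unfolding c1_def by blast
    have finT1: "finite T1" using T1(1) finS finite_subset by blast
    define P2 where "P2 a c = adj G (w a) (w c)" for a c
    have P2s: "\<forall>a c. P2 a c = P2 c a" unfolding P2_def using fsg_adj_sym[OF G] by blast
    obtain T2 where T2: "T2 \<subseteq> T1" "card T2 = Suc n"
      "(\<forall>a\<in>T2. \<forall>b\<in>T2. a \<noteq> b \<longrightarrow> P2 a b) \<or> (\<forall>a\<in>T2. \<forall>b\<in>T2. a \<noteq> b \<longrightarrow> \<not> P2 a b)"
      using spec[OF spec[OF r2, of T1], of P2] finT1 T1(2) P2s by blast
    define c2 where "c2 = (\<forall>a\<in>T2. \<forall>b\<in>T2. a \<noteq> b \<longrightarrow> P2 a b)"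
    have c2h: "P2 a b = c2" if "a \<in> T2" "b \<in> T2" "a \<noteq> b" for a b
      using T2(3) that unfolding c2_def by blast
    have finT2: "finite T2" using T2(1) finT1 finite_subset by blast
    obtain t where t: "\<And>a. a \<le> n \<Longrightarrow> t a \<in> T2" "\<And>a b. a < b \<Longrightarrow> b \<le> n \<Longrightarrow> t a < t b"
      using enum_set[OF finT2 T2(2)] by blast
    have tS: "t a < L" "d (t a) = b0" "t a \<in> T1" if "a \<le> n" for a
      using t(1)[OF that] T2(1) T1(1) by (auto simp: S_def)
    have tne: "t a \<noteq> t b" if "a \<le> n" "b \<le> n" "a \<noteq> b" for a b
      using t(2) that by (metis less_irrefl nat_neq_iff)
    define xx where "xx a = x (t a)" for a
    define ww where "ww a = w (t a)" for a
    have XW: "adj G (xx a) (ww b) = (if a = b then \<not> b0 else if b < a then b0 else c1)"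
      if ab: "a \<le> n" "b \<le> n" for a b
    proof -
      have k: "adj G (xx a) (ww b) \<longleftrightarrow> w (t b) \<in> A (t a)"
        unfolding xx_def ww_def using key[OF tS(1)[OF ab(1)] tS(1)[OF ab(2)]] .
      consider "a = b" | "b < a" | "a < b" by linarith
      then show ?thesis
      proof cases
        case 1 then show ?thesis using k ch(1) tS[OF ab(1)] by simp
      next
        case 2
        have "t b < t a" using t(2)[OF 2 ab(1)] .
        then have "w (t b) \<in> A (t a) \<longleftrightarrow> d (t b)" using ch(2) tS(1)[OF ab(1)] by blast
        then show ?thesis using k 2 tS(2)[OF ab(2)] by simp
      next
        case 3
        have lt: "t a < t b" using t(2)[OF 3 ab(2)] .
        have "P1 (t a) (t b) = c1" using c1h[OF tS(3)[OF ab(1)] tS(3)[OF ab(2)]] lt by simp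
        then have "w (t b) \<in> A (t a) \<longleftrightarrow> c1" using lt by (simp add: P1_def)
        then show ?thesis using k 3 by simp
      qed
    qed
    have Ane: "A (t a) \<noteq> A (t b)" if "a \<le> n" "b \<le> n" "a < b" for a b
    proof -
      have lt: "t a < t b" using t(2) that by blast
      have "w (t a) \<in> A (t a) \<longleftrightarrow> \<not> d (t a)" using ch(1) tS(1)[OF that(1)] by blast
      moreover have "w (t a) \<in> A (t b) \<longleftrightarrow> d (t a)" using ch(2) lt tS(1)[OF that(2)] by blast
      ultimately show ?thesis by blast
    qed
    show ?thesis
    proof (rule final_cases[OF G, where xx = xx and ww = ww and ?b0.0 = b0 and ?c1.0 = c1 and ?c2.0 = c2])
      fix a assume "a \<le> n" then show "xx a \<in> verts G" using xX tS XV unfolding xx_def by blast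
    next
      fix a assume "a \<le> n" then show "ww a \<in> verts G" using wV tS unfolding ww_def by blast
    next
      fix a b assume ab: "a \<le> n" "b \<le> n" "xx a = xx b"
      then have "A (t a) = A (t b)" using Tx tS unfolding xx_def by metis
      then show "a = b" using Ane ab(1,2) by (metis nat_neq_iff)
    next
      fix a b assume ab: "a \<le> n" "b \<le> n" "ww a = ww b"
      show "a = b"
      proof (rule ccontr)
        assume "a \<noteq> b"
        then consider "a < b" | "b < a" by linarith
        then show False
        proof cases
          case 1
          have "adj G (xx b) (ww a) = b0" using XW[OF ab(2,1)] 1 by simp
          moreover have "adj G (xx b) (ww b) = (\<not> b0)" using XW[OF ab(2,2)] by simp
          ultimately show False using ab(3) by simp
        next
          case 2
          have "adj G (xx a) (ww b) = b0" using XW[OF ab(1,2)] 2 by simp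
          moreover have "adj G (xx a) (ww a) = (\<not> b0)" using XW[OF ab(1,1)] by simp
          ultimately show False using ab(3) by simp
        qed
      qed
    next
      fix a b assume ab: "a \<le> n" "b \<le> n"
      show "xx a \<noteq> ww b" using xX[OF tS(1)[OF ab(1)]] wX[OF tS(1)[OF ab(2)]] unfolding xx_def ww_def by metis
    next
      fix a b assume ab: "a \<le> n" "b \<le> n" "a \<noteq> b"
      have "xx a \<noteq> xx b"
      proof
        assume "xx a = xx b"
        then have "A (t a) = A (t b)" using Tx tS ab unfolding xx_def by metis
        then show False using Ane ab by (metis nat_neq_iff)
      qed
      then show "adj G (xx a) (xx b)" using Xa xX tS ab unfolding xx_def by metis
    next
      fix a b assume ab: "a \<le> n" "b \<le> n" "a \<noteq> b"
      show "adj G (ww a) (ww b) = c2" using c2h[OF t(1)[OF ab(1)] t(1)[OF ab(2)] tne[OF ab]]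
        unfolding P2_def ww_def .
    next
      fix a b assume ab: "a \<le> n" "b \<le> n"
      show "adj G (xx a) (ww b) = (if a = b then \<not> b0 else if b < a then b0 else c1)" using XW[OF ab] .
    qed
  qed
  show ?thesis by (rule exI[of _ "2 ^ L"]) (use main in blast)
qed

lemma Delta_pos_NQ:
  assumes G: "fin_simple_graph G" and D: "1 \<le> Delta_tilde G"
  shows "\<exists>v\<in>verts G. Delta_tilde G = card (NQ G v)"
proof -
  let ?S = "{card {u \<in> verts (quotient_graph G). adj (quotient_graph G) C u} | C. C \<in> verts (quotient_graph G)}"
  have fin: "finite ?S" using cclasses_finite[OF G] by (simp add: vertsQ)
  have "Delta_tilde G = maxn ?S" by (simp add: Delta_tilde_def max_degree_def)
  then have "Delta_tilde G \<in> ?S" using maxn_cases[OF fin] D by auto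
  then obtain C where C: "C \<in> cclasses G" "Delta_tilde G = card {u \<in> cclasses G. adj (quotient_graph G) C u}"
    by (auto simp: vertsQ)
  then obtain v where v: "v \<in> verts G" "C = cclass G v" by (auto simp: cclasses_def)
  then show ?thesis using C by (auto simp: NQ_def)
qed

lemma Delta_bound:
  "\<exists>N. \<forall>G::'v graph. fin_simple_graph G \<longrightarrow> N \<le> Delta_tilde G \<longrightarrow> n \<le> p_fam frakB G"
proof -
  obtain M where M: "\<forall>(G::'v graph) X. fin_simple_graph G \<and> X \<subseteq> verts G \<and> M \<le> card X \<and>
      (\<forall>a\<in>X. \<forall>b\<in>X. a \<noteq> b \<longrightarrow> adj G a b) \<and> (\<forall>a\<in>X. \<forall>b\<in>X. a \<noteq> b \<longrightarrow> \<not> cequiv G a b)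
      \<longrightarrow> n \<le> p_fam frakB G"
    using traces_bound by blast
  obtain r where r: "\<forall>(S::'v set) (P::'v \<Rightarrow> 'v \<Rightarrow> bool). finite S \<and> r \<le> card S \<and> (\<forall>a b. P a b = P b a) \<longrightarrow>
     (\<exists>T\<subseteq>S. card T = M + n \<and> ((\<forall>a\<in>T. \<forall>b\<in>T. a \<noteq> b \<longrightarrow> P a b) \<or> (\<forall>a\<in>T. \<forall>b\<in>T. a \<noteq> b \<longrightarrow> \<not> P a b)))"
    using ramsey_sym[of "M + n"] by blast
  have main: "n \<le> p_fam frakB G" if G: "fin_simple_graph G" and D: "max r 1 \<le> Delta_tilde G" for G :: "'v graph"
  proof -
    obtain v where v: "v \<in> verts G" and Dv: "Delta_tilde G = card (NQ G v)"
      using Delta_pos_NQ[OF G] D by auto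
    have ex: "\<exists>u. u \<in> D \<and> adj G v u" if DQ: "D \<in> NQ G v" for D
    proof -
      from DQ obtain a b where D: "D \<in> cclasses G" "cclass G v \<noteq> D" "a \<in> cclass G v" "b \<in> D" "adj G a b"
        by (auto simp: NQ_def adjQ)
      have e: "cequiv G a v" using D(3) by (simp add: cclass_mem)
      have "b \<noteq> v"
      proof
        assume "b = v"
        then have "D = cclass G v" using cclass_of_mem[OF D(1) D(4)] by simp
        then show False using D(2) by simp
      qed
      then have "adj G v b" using cequiv_adj[OF G e D(5)] by simp
      then show ?thesis using D(4) by blast
    qed
    define rep where "rep D = (SOME u. u \<in> D \<and> adj G v u)" for D
    have rep: "rep D \<in> D" "adj G v (rep D)" if "D \<in> NQ G v" for D
      using someI_ex[OF ex[OF that]] unfolding rep_def by blast+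
    have NQc: "D \<in> cclasses G" "D \<noteq> cclass G v" if "D \<in> NQ G v" for D
      using that by (auto simp: NQ_def adjQ)
    have repc: "D = cclass G (rep D)" if "D \<in> NQ G v" for D
      using cclass_of_mem[OF NQc(1)[OF that] rep(1)[OF that]] .
    have inj: "inj_on rep (NQ G v)"
    proof (rule inj_onI)
      fix D D' assume "D \<in> NQ G v" "D' \<in> NQ G v" "rep D = rep D'"
      then show "D = D'" using repc by metis
    qed
    define R0 where "R0 = rep ` NQ G v"
    have finR0: "finite R0" using finite_NQ[OF G] by (simp add: R0_def)
    have cardR0: "r \<le> card R0" using card_image[OF inj] D Dv by (simp add: R0_def)
    have Psym: "\<forall>a b. adj G a b = adj G b a" using fsg_adj_sym[OF G] by blast
    obtain T where T: "T \<subseteq> R0" "card T = M + n"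
      "(\<forall>a\<in>T. \<forall>b\<in>T. a \<noteq> b \<longrightarrow> adj G a b) \<or> (\<forall>a\<in>T. \<forall>b\<in>T. a \<noteq> b \<longrightarrow> \<not> adj G a b)"
      using spec[OF spec[OF r, of R0], of "adj G"] finR0 cardR0 Psym by blast
    have finT: "finite T" using T(1) finR0 finite_subset by blast
    have TV: "T \<subseteq> verts G"
    proof
      fix a assume aT: "a \<in> T"
      obtain D where "D \<in> NQ G v" "a = rep D" using T(1) aT by (auto simp: R0_def)
      then show "a \<in> verts G" using rep(1) NQc(1) cclasses_sub by blast
    qed
    have Tadj: "adj G v a" if aT: "a \<in> T" for a
    proof -
      obtain D where "D \<in> NQ G v" "a = rep D" using T(1) aT by (auto simp: R0_def)
      then show ?thesis using rep(2) by blast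
    qed
    have Tne: "a \<noteq> v" if "a \<in> T" for a
      using Tadj[OF that] fsg_irr[OF G] by metis
    have Tineq: "\<not> cequiv G a b" if ab: "a \<in> T" "b \<in> T" "a \<noteq> b" for a b
    proof
      assume e: "cequiv G a b"
      obtain D where D: "D \<in> NQ G v" "a = rep D" using T(1) ab(1) by (auto simp: R0_def)
      obtain D' where D': "D' \<in> NQ G v" "b = rep D'" using T(1) ab(2) by (auto simp: R0_def)
      have "cclass G a = cclass G b" using cclass_eq[OF e] .
      then have "D = D'" using repc[OF D(1)] repc[OF D'(1)] D(2) D'(2) by simp
      then show False using D(2) D'(2) ab(3) by simp
    qed
    from T(3) show ?thesis
    proof
      assume cl: "\<forall>a\<in>T. \<forall>b\<in>T. a \<noteq> b \<longrightarrow> adj G a b"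
      have "M \<le> card T" using T(2) by simp
      then show ?thesis using M G TV cl Tineq by blast
    next
      assume ind: "\<forall>a\<in>T. \<forall>b\<in>T. a \<noteq> b \<longrightarrow> \<not> adj G a b"
      obtain h where h: "bij_betw h {1..card T} T" using ex_bij_betw_nat_finite_1[OF finT] by blast
      have hT: "h i \<in> T" if "i \<in> {1..M + n}" for i using h that T(2) by (auto simp: bij_betw_def)
      have "induced_sub (star_seq (M + n)) G"
      proof (rule embed_star[OF G v, where y = h])
        fix i assume "i \<in> {1..M + n}" then show "h i \<in> verts G" using hT TV by blast
      next
        fix i j assume "i \<in> {1..M + n}" "j \<in> {1..M + n}" "h i = h j"
        then show "i = j" using h T(2) unfolding bij_betw_def inj_on_def by metis
      next
        fix i assume "i \<in> {1..M + n}" then show "h i \<noteq> v" using hT Tne by blast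
      next
        fix i assume "i \<in> {1..M + n}" then show "adj G v (h i)" using hT Tadj by blast
      next
        fix i j assume ij: "i \<in> {1..M + n}" "j \<in> {1..M + n}"
        show "\<not> adj G (h i) (h j)"
        proof (cases "h i = h j")
          case True then show ?thesis using fsg_irr[OF G] by metis
        next
          case False then show ?thesis using ind hT[OF ij(1)] hT[OF ij(2)] by blast
        qed
      qed
      moreover have "star_seq \<in> frakB" by (simp add: frakB_def)
      ultimately have "M + n \<le> p_fam frakB G" using p_ge[OF G] by blast
      then show ?thesis by simp
    qed
  qed
  show ?thesis by (rule exI[of _ "max r 1"]) (use main in blast)
qed

theorem corollary7p6:
  shows "param_equiv (p_fam frakB) Delta_tilde
       \<and> param_equiv (p_fam frakB) cdeg
       \<and> param_equiv (p_fam frakB) (\<lambda>G. max (cideg G) (omega_tilde G))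
       \<and> param_equiv (p_fam frakB) (\<lambda>G. max (alpha_star G) (omega_tilde G))
       \<and> param_equiv (p_fam frakB) (\<lambda>G. max (theta_star G) (omega_tilde G))"
proof -
  have "\<forall>n. \<exists>N. \<forall>G::nat graph. fin_simple_graph G \<longrightarrow> N \<le> Delta_tilde G \<longrightarrow> n \<le> p_fam frakB G"
    using Delta_bound by blast
  then obtain Nf where Nf: "\<And>n G. fin_simple_graph (G::nat graph) \<Longrightarrow> Nf n \<le> Delta_tilde G \<Longrightarrow> n \<le> p_fam frakB G"
    using choice by metis
  define gD where "gD k = Nf (Suc k)" for k
  define f0 where "f0 k = 2 ^ (k + 1) + k + (1::nat)" for k
  define gB where "gB k = f0 (gD k)" for k
  define gC where "gC k = (gD k + 1) * 2 ^ (gD k + 1)" for k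
  have Dle: "Delta_tilde G \<le> gD (p_fam frakB G)" if G: "fin_simple_graph G" for G :: "nat graph"
  proof (rule ccontr)
    assume "\<not> ?thesis"
    then have "Nf (Suc (p_fam frakB G)) \<le> Delta_tilde G" by (simp add: gD_def)
    then have "Suc (p_fam frakB G) \<le> p_fam frakB G" using Nf[OF G] by blast
    then show False by simp
  qed
  have pw: "(2::nat) ^ (a + 1) \<le> 2 ^ (b + 1)" if "a \<le> b" for a b
    using that by (intro power_increasing) auto
  have facts: "p_fam frakB G \<le> max (alpha_star G) (omega_tilde G)"
     "alpha_star G \<le> theta_star G" "theta_star G \<le> cideg G"
     "cideg G \<le> 2 ^ (Delta_tilde G + 1)" "omega_tilde G \<le> Delta_tilde G + 1"
     "cideg G \<le> cdeg G + 1" "omega_tilde G \<le> 2 ^ (cdeg G + 1)"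
     "cdeg G \<le> omega_tilde G * cideg G" "Delta_tilde G \<le> gD (p_fam frakB G)"
    if G: "fin_simple_graph G" for G :: "nat graph"
    using p_le_Sm[OF G] alpha_le_theta[OF G] theta_le_cideg[OF G] cideg_le_Delta[OF G]
      omega_le_Delta[OF G] cideg_le_cdeg[OF G] omega_le_cdeg[OF G] cdeg_le[OF G] Dle[OF G] by blast+
  have bigB: "max (cideg G) (omega_tilde G) \<le> gB (p_fam frakB G)" if G: "fin_simple_graph G" for G :: "nat graph"
  proof -
    have D: "Delta_tilde G \<le> gD (p_fam frakB G)" using facts(9)[OF G] .
    have P: "2 ^ (Delta_tilde G + 1) \<le> (2::nat) ^ (gD (p_fam frakB G) + 1)" using pw[OF D] .
    have c: "cideg G \<le> 2 ^ (gD (p_fam frakB G) + 1) + gD (p_fam frakB G) + 1"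
      using facts(4)[OF G] P by linarith
    have o: "omega_tilde G \<le> 2 ^ (gD (p_fam frakB G) + 1) + gD (p_fam frakB G) + 1"
      using facts(5)[OF G] D by linarith
    show ?thesis unfolding gB_def f0_def using c o by (rule max.boundedI)
  qed
  have pD: "p_fam frakB G \<le> f0 (Delta_tilde G)" if G: "fin_simple_graph G" for G :: "nat graph"
  proof -
    have "max (alpha_star G) (omega_tilde G) \<le> 2 ^ (Delta_tilde G + 1) + Delta_tilde G + 1"
    proof (rule max.boundedI)
      show "alpha_star G \<le> 2 ^ (Delta_tilde G + 1) + Delta_tilde G + 1"
        using facts(2,3,4)[OF G] by linarith
      show "omega_tilde G \<le> 2 ^ (Delta_tilde G + 1) + Delta_tilde G + 1"
        using facts(5)[OF G] by linarith
    qed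
    then show ?thesis unfolding f0_def using facts(1)[OF G] by linarith
  qed
  have pC: "p_fam frakB G \<le> f0 (cdeg G)" if G: "fin_simple_graph G" for G :: "nat graph"
  proof -
    have "max (alpha_star G) (omega_tilde G) \<le> 2 ^ (cdeg G + 1) + cdeg G + 1"
    proof (rule max.boundedI)
      show "alpha_star G \<le> 2 ^ (cdeg G + 1) + cdeg G + 1"
        using facts(2,3,6)[OF G] by linarith
      show "omega_tilde G \<le> 2 ^ (cdeg G + 1) + cdeg G + 1"
        using facts(7)[OF G] by linarith
    qed
    then show ?thesis unfolding f0_def using facts(1)[OF G] by linarith
  qed
  have cC: "cdeg G \<le> gC (p_fam frakB G)" if G: "fin_simple_graph G" for G :: "nat graph"
  proof -
    have D: "Delta_tilde G \<le> gD (p_fam frakB G)" using facts(9)[OF G] .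
    have "cdeg G \<le> omega_tilde G * cideg G" using facts(8)[OF G] .
    also have "\<dots> \<le> (Delta_tilde G + 1) * 2 ^ (Delta_tilde G + 1)"
      using facts(5,4)[OF G] by (rule mult_le_mono)
    also have "\<dots> \<le> (gD (p_fam frakB G) + 1) * 2 ^ (gD (p_fam frakB G) + 1)"
      using D pw[OF D] by (intro mult_le_mono) auto
    finally show ?thesis by (simp add: gC_def)
  qed
  show ?thesis unfolding param_equiv_def
  proof (intro conjI)
    show "\<exists>f g. \<forall>G::nat graph. fin_simple_graph G \<longrightarrow> p_fam frakB G \<le> f (Delta_tilde G) \<and> Delta_tilde G \<le> g (p_fam frakB G)"
    proof (rule exI[of _ f0], rule exI[of _ gD], intro allI impI conjI)
      fix G :: "nat graph" assume G: "fin_simple_graph G"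
      show "p_fam frakB G \<le> f0 (Delta_tilde G)" using pD[OF G] .
      show "Delta_tilde G \<le> gD (p_fam frakB G)" using facts(9)[OF G] .
    qed
    show "\<exists>f g. \<forall>G::nat graph. fin_simple_graph G \<longrightarrow> p_fam frakB G \<le> f (cdeg G) \<and> cdeg G \<le> g (p_fam frakB G)"
    proof (rule exI[of _ f0], rule exI[of _ gC], intro allI impI conjI)
      fix G :: "nat graph" assume G: "fin_simple_graph G"
      show "p_fam frakB G \<le> f0 (cdeg G)" using pC[OF G] .
      show "cdeg G \<le> gC (p_fam frakB G)" using cC[OF G] .
    qed
    show "\<exists>f g. \<forall>G::nat graph. fin_simple_graph G \<longrightarrow> p_fam frakB G \<le> f (max (cideg G) (omega_tilde G)) \<and> max (cideg G) (omega_tilde G) \<le> g (p_fam frakB G)"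
    proof (rule exI[of _ "\<lambda>k. k"], rule exI[of _ gB], intro allI impI conjI)
      fix G :: "nat graph" assume G: "fin_simple_graph G"
      show "p_fam frakB G \<le> max (cideg G) (omega_tilde G)"
        using facts(1,2,3)[OF G] by (simp add: max_def split: if_splits)
      show "max (cideg G) (omega_tilde G) \<le> gB (p_fam frakB G)" using bigB[OF G] .
    qed
    show "\<exists>f g. \<forall>G::nat graph. fin_simple_graph G \<longrightarrow> p_fam frakB G \<le> f (max (alpha_star G) (omega_tilde G)) \<and> max (alpha_star G) (omega_tilde G) \<le> g (p_fam frakB G)"
    proof (rule exI[of _ "\<lambda>k. k"], rule exI[of _ gB], intro allI impI conjI)
      fix G :: "nat graph" assume G: "fin_simple_graph G"
      show "p_fam frakB G \<le> max (alpha_star G) (omega_tilde G)" using facts(1)[OF G] .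
      show "max (alpha_star G) (omega_tilde G) \<le> gB (p_fam frakB G)"
        using bigB[OF G] facts(2,3)[OF G] by (simp add: max_def split: if_splits)
    qed
    show "\<exists>f g. \<forall>G::nat graph. fin_simple_graph G \<longrightarrow> p_fam frakB G \<le> f (max (theta_star G) (omega_tilde G)) \<and> max (theta_star G) (omega_tilde G) \<le> g (p_fam frakB G)"
    proof (rule exI[of _ "\<lambda>k. k"], rule exI[of _ gB], intro allI impI conjI)
      fix G :: "nat graph" assume G: "fin_simple_graph G"
      show "p_fam frakB G \<le> max (theta_star G) (omega_tilde G)"
        using facts(1,2)[OF G] by (simp add: max_def split: if_splits)
      show "max (theta_star G) (omega_tilde G) \<le> gB (p_fam frakB G)"
        using bigB[OF G] facts(3)[OF G] by (simp add: max_def split: if_splits)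
    qed
  qed
qed

end
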